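(* Let $A$ be an $N\times N$ $\{0,1\}$-matrix with no zero row and no zero column, let $\tau=(\tau_+,\tau_-)$ be a comparable pair of functions $\mathcal{V}_A\to\Omega_A$ and $s\in(0,1]$. Then $BP^{\exp}(\tau)$ and $BP_s(\tau)$ are even unbounded Fredholm modules over $C(\Omega_A)$. For $s\geq 1/2$, $BP_s(\tau)$ is $\theta$-summable, whereas $BP^{\exp}(\tau)$ is finitely summable. If $\tau_+(\mathcal{V}_A)\cup\tau_-(\mathcal{V}_A)$ is dense in $\Omega_A$, these unbounded Fredholm modules are spectral triples.
   Context: $\mathcal{V}_A$ is the set of admissible finite words $\mu_1\cdots\mu_k$ ($A_{\mu_j\mu_{j+1}}=1$) including the empty word, $|\mu|$ the length; $\Omega_A$ the compact space of infinite admissible sequences with metric $d(x,y)=e^{-\min\{n:x_n\neq y_n\}}$ ($x\ne y$), and $C_\mu$ the cylinder set of sequences beginning with $\mu$. A pair $\tau=(\tau_+,\tau_-)$ of functions $\mathcal{V}_A\to\Omega_A$ is comparable if there is $C>0$ with $d(\tau_+(\mu),\tau_-(\mu))\le C\,\mathrm{diam}(C_\mu)$ for all $\mu$. For $\mathfrak{t}:\mathcal{V}_A\to\Omega_A$, $\pi_{\mathfrak t}:C(\Omega_A)\to\mathbb{B}(\ell^2(\mathcal{V}_A))$ is $\pi_{\mathfrak t}(f)\delta_\mu=f(\mathfrak t(\mu))\delta_\mu$. $BP_s(\tau)=(\pi_\tau,\ell^2(\mathcal{V}_A,\mathbb{C}^2),D_{\mathcal{V},s})$ with $\ell^2(\mathcal{V}_A,\mathbb{C}^2)=\ell^2(\mathcal{V}_A)\oplus\ell^2(\mathcal{V}_A)$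 graded by this decomposition, $\pi_\tau=\pi_{\tau_+}\oplus\pi_{\tau_-}$, and $D_{\mathcal{V},s}(\phi_+,\phi_-)(\mu)=|\mu|^s(\phi_-(\mu),\phi_+(\mu))$ (closure from finitely supported functions); $BP^{\exp}(\tau)$ is the same with $|\mu|^s$ replaced by $e^{|\mu|}$. An even unbounded Fredholm module $(\pi,\mathcal{H},D)$ over $B$: graded $\mathcal{H}$, even representation, odd self-adjoint $D$ with $\pi(b)(D\pm i)^{-1}$ compact and $\{b:\pi(b)\mathrm{Dom}D\subseteq\mathrm{Dom}D,\ [D,\pi(b)]\text{ bounded}\}$ dense; a spectral triple if moreover $\pi$ is faithful. It is $p$-summable if $\pi(b)(D\pm i)^{-1}\in\mathcal{L}^p$ for $b$ in a dense subalgebra of that Lipschitz algebra, finitely summable if $p$-summable for some $p$, and $\theta$-summable if instead $\pi(b)(D\pm i)^{-1}\in\mathrm{Li}^{1/2}$ (singular values $O(\log(k)^{-1/2})$). *)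

theory Defs
  imports "HOL-Analysis.Analysis" "HOL-Library.Landau_Symbols"
begin

text \<open>Words and sequences are indexed from 0, but the
  metric uses the paper's 1-based positions.\<close>

definition admissible :: "(nat \<Rightarrow> nat \<Rightarrow> bool) \<Rightarrow> nat \<Rightarrow> nat list \<Rightarrow> bool" where
  "admissible A N \<mu> \<longleftrightarrow> (\<forall>a\<in>set \<mu>. a < N) \<and>
     (\<forall>j. Suc j < length \<mu> \<longrightarrow> A (\<mu> ! j) (\<mu> ! Suc j))"

definition words :: "(nat \<Rightarrow> nat \<Rightarrow> bool) \<Rightarrow> nat \<Rightarrow> nat list set" where
  "words A N = {\<mu>. admissible A N \<mu>}"

definition Omega :: "(nat \<Rightarrow> nat \<Rightarrow> bool) \<Rightarrow> nat \<Rightarrow> (nat \<Rightarrow> nat) set" where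
  "Omega A N = {x. (\<forall>n. x n < N) \<and> (\<forall>n. A (x n) (x (Suc n)))}"

definition seqdist :: "(nat \<Rightarrow> nat) \<Rightarrow> (nat \<Rightarrow> nat) \<Rightarrow> real" where
  "seqdist x y = (if x = y then 0 else exp (- (real (LEAST n. x n \<noteq> y n) + 1)))"

definition cyl :: "(nat \<Rightarrow> nat \<Rightarrow> bool) \<Rightarrow> nat \<Rightarrow> nat list \<Rightarrow> (nat \<Rightarrow> nat) set" where
  "cyl A N \<mu> = {x \<in> Omega A N. \<forall>j<length \<mu>. x j = \<mu> ! j}"

definition sdiam :: "(nat \<Rightarrow> nat) set \<Rightarrow> real" where
  "sdiam S = (if S = {} then 0 else Sup {seqdist x y | x y. x \<in> S \<and> y \<in> S})"

definition comparable ::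
  "(nat \<Rightarrow> nat \<Rightarrow> bool) \<Rightarrow> nat \<Rightarrow> (nat list \<Rightarrow> nat \<Rightarrow> nat) \<Rightarrow> (nat list \<Rightarrow> nat \<Rightarrow> nat) \<Rightarrow> bool" where
  "comparable A N tp tm \<longleftrightarrow> (\<exists>C>0. \<forall>\<mu>\<in>words A N.
      seqdist (tp \<mu>) (tm \<mu>) \<le> C * sdiam (cyl A N \<mu>))"

definition Cont :: "(nat \<Rightarrow> nat \<Rightarrow> bool) \<Rightarrow> nat \<Rightarrow> ((nat \<Rightarrow> nat) \<Rightarrow> complex) set" where
  "Cont A N = {f. \<forall>x\<in>Omega A N. \<forall>e>0. \<exists>d>0. \<forall>y\<in>Omega A N.
      seqdist x y < d \<longrightarrow> cmod (f y - f x) < e}"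

definition sdense_in :: "(nat \<Rightarrow> nat) set \<Rightarrow> (nat \<Rightarrow> nat) set \<Rightarrow> bool" where
  "sdense_in S X \<longleftrightarrow> (\<forall>x\<in>X. \<forall>e>0. \<exists>y\<in>S. seqdist x y < e)"

definition l2 :: "'i set \<Rightarrow> ('i \<Rightarrow> complex) set" where
  "l2 I = {\<phi>. (\<forall>x. x \<notin> I \<longrightarrow> \<phi> x = 0) \<and> (\<lambda>x. (cmod (\<phi> x))\<^sup>2) summable_on UNIV}"

definition l2_norm :: "('i \<Rightarrow> complex) \<Rightarrow> real" where
  "l2_norm \<phi> = sqrt (infsum (\<lambda>x. (cmod (\<phi> x))\<^sup>2) UNIV)"

definition l2_inner :: "('i \<Rightarrow> complex) \<Rightarrow> ('i \<Rightarrow> complex) \<Rightarrow> complex" where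
  "l2_inner \<phi> \<psi> = infsum (\<lambda>x. \<phi> x * cnj (\<psi> x)) UNIV"

definition l2_conv :: "(nat \<Rightarrow> 'i \<Rightarrow> complex) \<Rightarrow> ('i \<Rightarrow> complex) \<Rightarrow> bool" where
  "l2_conv f \<phi> \<longleftrightarrow> (\<lambda>n. l2_norm (\<lambda>x. f n x - \<phi> x)) \<longlonglongrightarrow> 0"

type_synonym 'i hop = "('i \<Rightarrow> complex) \<Rightarrow> ('i \<Rightarrow> complex)"

definition bdd_op :: "('i \<Rightarrow> complex) set \<Rightarrow> 'i hop \<Rightarrow> bool" where
  "bdd_op H T \<longleftrightarrow> (\<forall>\<phi>\<in>H. T \<phi> \<in> H) \<and>
     (\<forall>\<phi>\<in>H. \<forall>\<psi>\<in>H. \<forall>a. T (\<lambda>x. a * \<phi> x + \<psi> x) = (\<lambda>x. a * T \<phi> x + T \<psi> x)) \<and>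
     (\<exists>K. \<forall>\<phi>\<in>H. l2_norm (T \<phi>) \<le> K * l2_norm \<phi>)"

definition hop_norm :: "('i \<Rightarrow> complex) set \<Rightarrow> 'i hop \<Rightarrow> real" where
  "hop_norm H T = Sup {l2_norm (T \<phi>) | \<phi>. \<phi> \<in> H \<and> l2_norm \<phi> \<le> 1}"

definition cpt_op :: "('i \<Rightarrow> complex) set \<Rightarrow> 'i hop \<Rightarrow> bool" where
  "cpt_op H T \<longleftrightarrow> bdd_op H T \<and>
     (\<forall>f::nat \<Rightarrow> 'i \<Rightarrow> complex. (\<forall>n. f n \<in> H) \<and> bounded (range (\<lambda>n. l2_norm (f n))) \<longrightarrow>
        (\<exists>r \<psi>. strict_mono r \<and> \<psi> \<in> H \<and> l2_conv (\<lambda>n. T (f (r n))) \<psi>))"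

definition rank_le_op :: "('i \<Rightarrow> complex) set \<Rightarrow> nat \<Rightarrow> 'i hop \<Rightarrow> bool" where
  "rank_le_op H k F \<longleftrightarrow> bdd_op H F \<and>
     (\<exists>vs. length vs \<le> k \<and> set vs \<subseteq> H \<and>
        (\<forall>\<phi>\<in>H. \<exists>c. F \<phi> = (\<lambda>x. \<Sum>j<length vs. c j * (vs ! j) x)))"

text \<open>k-th singular value (k = 0,1,2,...), as the approximation number
  s_k(T) = inf { ||T - F|| : rank F \<le> k }.\<close>
definition sing_val :: "('i \<Rightarrow> complex) set \<Rightarrow> 'i hop \<Rightarrow> nat \<Rightarrow> real" where
  "sing_val H T k = Inf {hop_norm H (\<lambda>\<phi> x. T \<phi> x - F \<phi> x) | F. rank_le_op H k F}"

definition schatten :: "('i \<Rightarrow> complex) set \<Rightarrow> real \<Rightarrow> 'i hop \<Rightarrow> bool" where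
  "schatten H p T \<longleftrightarrow> cpt_op H T \<and> summable (\<lambda>k. sing_val H T k powr p)"

definition Li_half :: "('i \<Rightarrow> complex) set \<Rightarrow> 'i hop \<Rightarrow> bool" where
  "Li_half H T \<longleftrightarrow> cpt_op H T \<and>
     (\<lambda>k. sing_val H T k) \<in> O(\<lambda>k. ln (real k) powr (-1/2))"

definition self_adjoint :: "('i \<Rightarrow> complex) set \<Rightarrow> ('i \<Rightarrow> complex) set \<Rightarrow> 'i hop \<Rightarrow> bool" where
  "self_adjoint H Dom D \<longleftrightarrow> Dom \<subseteq> H \<and> (\<forall>\<phi>\<in>Dom. D \<phi> \<in> H) \<and>
     (\<forall>\<phi>\<in>Dom. \<forall>\<psi>\<in>Dom. \<forall>a. (\<lambda>x. a * \<phi> x + \<psi> x) \<in> Dom \<and>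
         D (\<lambda>x. a * \<phi> x + \<psi> x) = (\<lambda>x. a * D \<phi> x + D \<psi> x)) \<and>
     (\<forall>\<phi>\<in>H. \<exists>f. (\<forall>n. f n \<in> Dom) \<and> l2_conv f \<phi>) \<and>
     (\<forall>\<eta>\<in>H. \<eta> \<in> Dom \<longleftrightarrow> (\<exists>\<zeta>\<in>H. \<forall>\<phi>\<in>Dom. l2_inner (D \<phi>) \<eta> = l2_inner \<phi> \<zeta>)) \<and>
     (\<forall>\<eta>\<in>Dom. \<forall>\<phi>\<in>Dom. l2_inner (D \<phi>) \<eta> = l2_inner \<phi> (D \<eta>))"

definition resolvent :: "('i \<Rightarrow> complex) set \<Rightarrow> 'i hop \<Rightarrow> complex \<Rightarrow> 'i hop" where
  "resolvent Dom D l \<phi> = (THE \<psi>. \<psi> \<in> Dom \<and> (\<lambda>x. D \<psi> x + l * \<psi> x) = \<phi>)"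

definition closure_dom :: "('i \<Rightarrow> complex) set \<Rightarrow> ('i \<Rightarrow> complex) set \<Rightarrow> 'i hop \<Rightarrow> ('i \<Rightarrow> complex) set" where
  "closure_dom H Dom0 D0 = {\<phi> \<in> H. \<exists>f \<psi>. (\<forall>n. f n \<in> Dom0) \<and> l2_conv f \<phi> \<and> \<psi> \<in> H \<and>
       l2_conv (\<lambda>n. D0 (f n)) \<psi>}"

definition closure_op :: "('i \<Rightarrow> complex) set \<Rightarrow> ('i \<Rightarrow> complex) set \<Rightarrow> 'i hop \<Rightarrow> 'i hop" where
  "closure_op H Dom0 D0 \<phi> = (THE \<psi>. \<exists>f. (\<forall>n. f n \<in> Dom0) \<and> l2_conv f \<phi> \<and> \<psi> \<in> H \<and>
       l2_conv (\<lambda>n. D0 (f n)) \<psi>)"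

text \<open>Grading: gam x = True means x lies in the even part.\<close>
definition grade :: "('i \<Rightarrow> bool) \<Rightarrow> 'i hop" where
  "grade gam \<phi> = (\<lambda>x. if gam x then \<phi> x else - \<phi> x)"

definition star_rep :: "(('x \<Rightarrow> complex) set) \<Rightarrow> 'x set \<Rightarrow> ('i \<Rightarrow> complex) set \<Rightarrow>
    (('x \<Rightarrow> complex) \<Rightarrow> 'i hop) \<Rightarrow> bool" where
  "star_rep B X H \<pi> \<longleftrightarrow>
     (\<forall>b\<in>B. bdd_op H (\<pi> b)) \<and>
     (\<forall>b\<in>B. \<forall>c\<in>B. (\<forall>x\<in>X. b x = c x) \<longrightarrow> (\<forall>\<phi>\<in>H. \<pi> b \<phi> = \<pi> c \<phi>)) \<and>
     (\<forall>b\<in>B. \<forall>c\<in>B. \<forall>\<phi>\<in>H. \<pi> (\<lambda>x. b x + c x) \<phi> = (\<lambda>i. \<pi> b \<phi> i + \<pi> c \<phi> i)) \<and>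
     (\<forall>b\<in>B. \<forall>a. \<forall>\<phi>\<in>H. \<pi> (\<lambda>x. a * b x) \<phi> = (\<lambda>i. a * \<pi> b \<phi> i)) \<and>
     (\<forall>b\<in>B. \<forall>c\<in>B. \<forall>\<phi>\<in>H. \<pi> (\<lambda>x. b x * c x) \<phi> = \<pi> b (\<pi> c \<phi>)) \<and>
     (\<forall>b\<in>B. \<forall>\<phi>\<in>H. \<forall>\<psi>\<in>H. l2_inner (\<pi> b \<phi>) \<psi> = l2_inner \<phi> (\<pi> (\<lambda>x. cnj (b x)) \<psi>))"

definition fdense_in :: "(('x \<Rightarrow> complex) set) \<Rightarrow> (('x \<Rightarrow> complex) set) \<Rightarrow> 'x set \<Rightarrow> bool" where
  "fdense_in S B X \<longleftrightarrow> (\<forall>f\<in>B. \<forall>e>0. \<exists>g\<in>S. \<forall>x\<in>X. cmod (f x - g x) < e)"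

definition subalgebra :: "(('x \<Rightarrow> complex) set) \<Rightarrow> bool" where
  "subalgebra S \<longleftrightarrow> (\<forall>b\<in>S. \<forall>c\<in>S. (\<lambda>x. b x + c x) \<in> S \<and> (\<lambda>x. b x * c x) \<in> S) \<and>
     (\<forall>b\<in>S. \<forall>a. (\<lambda>x. a * b x) \<in> S)"

definition lip_alg :: "(('x \<Rightarrow> complex) set) \<Rightarrow> (('x \<Rightarrow> complex) \<Rightarrow> 'i hop) \<Rightarrow>
    ('i \<Rightarrow> complex) set \<Rightarrow> 'i hop \<Rightarrow> ('x \<Rightarrow> complex) set" where
  "lip_alg B \<pi> Dom D = {b\<in>B. (\<forall>\<phi>\<in>Dom. \<pi> b \<phi> \<in> Dom) \<and>
     (\<exists>K. \<forall>\<phi>\<in>Dom. l2_norm (\<lambda>i. D (\<pi> b \<phi>) i - \<pi> b (D \<phi>) i) \<le> K * l2_norm \<phi>)}"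

definition even_ufm :: "(('x \<Rightarrow> complex) set) \<Rightarrow> 'x set \<Rightarrow> 'i set \<Rightarrow> ('i \<Rightarrow> bool) \<Rightarrow>
    (('x \<Rightarrow> complex) \<Rightarrow> 'i hop) \<Rightarrow> ('i \<Rightarrow> complex) set \<Rightarrow> 'i hop \<Rightarrow> bool" where
  "even_ufm B X I gam \<pi> Dom D \<longleftrightarrow>
     star_rep B X (l2 I) \<pi> \<and>
     (\<forall>b\<in>B. \<forall>\<phi>\<in>l2 I. \<pi> b (grade gam \<phi>) = grade gam (\<pi> b \<phi>)) \<and>
     self_adjoint (l2 I) Dom D \<and>
     (\<forall>\<phi>\<in>Dom. grade gam \<phi> \<in> Dom \<and> D (grade gam \<phi>) = (\<lambda>i. - grade gam (D \<phi>) i)) \<and>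
     (\<forall>b\<in>B. cpt_op (l2 I) (\<lambda>\<phi>. \<pi> b (resolvent Dom D \<i> \<phi>)) \<and>
             cpt_op (l2 I) (\<lambda>\<phi>. \<pi> b (resolvent Dom D (- \<i>) \<phi>))) \<and>
     fdense_in (lip_alg B \<pi> Dom D) B X"

definition spectral_triple :: "(('x \<Rightarrow> complex) set) \<Rightarrow> 'x set \<Rightarrow> 'i set \<Rightarrow> ('i \<Rightarrow> bool) \<Rightarrow>
    (('x \<Rightarrow> complex) \<Rightarrow> 'i hop) \<Rightarrow> ('i \<Rightarrow> complex) set \<Rightarrow> 'i hop \<Rightarrow> bool" where
  "spectral_triple B X I gam \<pi> Dom D \<longleftrightarrow> even_ufm B X I gam \<pi> Dom D \<and>
     (\<forall>b\<in>B. (\<forall>\<phi>\<in>l2 I. \<pi> b \<phi> = (\<lambda>i. 0)) \<longrightarrow> (\<forall>x\<in>X. b x = 0))"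

definition p_summable :: "real \<Rightarrow> (('x \<Rightarrow> complex) set) \<Rightarrow> 'x set \<Rightarrow> 'i set \<Rightarrow>
    (('x \<Rightarrow> complex) \<Rightarrow> 'i hop) \<Rightarrow> ('i \<Rightarrow> complex) set \<Rightarrow> 'i hop \<Rightarrow> bool" where
  "p_summable p B X I \<pi> Dom D \<longleftrightarrow> (\<exists>S. S \<subseteq> lip_alg B \<pi> Dom D \<and> subalgebra S \<and> fdense_in S B X \<and>
     (\<forall>b\<in>S. schatten (l2 I) p (\<lambda>\<phi>. \<pi> b (resolvent Dom D \<i> \<phi>)) \<and>
             schatten (l2 I) p (\<lambda>\<phi>. \<pi> b (resolvent Dom D (- \<i>) \<phi>))))"

definition finitely_summable :: "(('x \<Rightarrow> complex) set) \<Rightarrow> 'x set \<Rightarrow> 'i set \<Rightarrow>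
    (('x \<Rightarrow> complex) \<Rightarrow> 'i hop) \<Rightarrow> ('i \<Rightarrow> complex) set \<Rightarrow> 'i hop \<Rightarrow> bool" where
  "finitely_summable B X I \<pi> Dom D \<longleftrightarrow> (\<exists>p>0. p_summable p B X I \<pi> Dom D)"

definition theta_summable :: "(('x \<Rightarrow> complex) set) \<Rightarrow> 'x set \<Rightarrow> 'i set \<Rightarrow>
    (('x \<Rightarrow> complex) \<Rightarrow> 'i hop) \<Rightarrow> ('i \<Rightarrow> complex) set \<Rightarrow> 'i hop \<Rightarrow> bool" where
  "theta_summable B X I \<pi> Dom D \<longleftrightarrow> (\<exists>S. S \<subseteq> lip_alg B \<pi> Dom D \<and> subalgebra S \<and> fdense_in S B X \<and>
     (\<forall>b\<in>S. Li_half (l2 I) (\<lambda>\<phi>. \<pi> b (resolvent Dom D \<i> \<phi>)) \<and>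
             Li_half (l2 I) (\<lambda>\<phi>. \<pi> b (resolvent Dom D (- \<i>) \<phi>))))"

text \<open>l^2(V_A, C^2) = l^2(V_A) \<oplus> l^2(V_A) is l^2(V_A \<times> UNIV) with index (\<mu>, True) for the
  + component and (\<mu>, False) for the - component; grading by snd.\<close>

definition BP_index :: "(nat \<Rightarrow> nat \<Rightarrow> bool) \<Rightarrow> nat \<Rightarrow> (nat list \<times> bool) set" where
  "BP_index A N = words A N \<times> UNIV"

definition pi_tau :: "(nat list \<Rightarrow> nat \<Rightarrow> nat) \<Rightarrow> (nat list \<Rightarrow> nat \<Rightarrow> nat) \<Rightarrow>
    ((nat \<Rightarrow> nat) \<Rightarrow> complex) \<Rightarrow> (nat list \<times> bool) hop" where
  "pi_tau tp tm f \<phi> = (\<lambda>(\<mu>, b). (if b then f (tp \<mu>) else f (tm \<mu>)) * \<phi> (\<mu>, b))"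

definition D_fin :: "(nat list \<Rightarrow> real) \<Rightarrow> (nat list \<times> bool) hop" where
  "D_fin w \<phi> = (\<lambda>(\<mu>, b). complex_of_real (w \<mu>) * \<phi> (\<mu>, \<not> b))"

definition fin_supp :: "(nat \<Rightarrow> nat \<Rightarrow> bool) \<Rightarrow> nat \<Rightarrow> (nat list \<times> bool \<Rightarrow> complex) set" where
  "fin_supp A N = {\<phi> \<in> l2 (BP_index A N). finite {i. \<phi> i \<noteq> 0}}"

definition D_dom :: "(nat \<Rightarrow> nat \<Rightarrow> bool) \<Rightarrow> nat \<Rightarrow> (nat list \<Rightarrow> real) \<Rightarrow> (nat list \<times> bool \<Rightarrow> complex) set" where
  "D_dom A N w = closure_dom (l2 (BP_index A N)) (fin_supp A N) (D_fin w)"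

definition D_op :: "(nat \<Rightarrow> nat \<Rightarrow> bool) \<Rightarrow> nat \<Rightarrow> (nat list \<Rightarrow> real) \<Rightarrow> (nat list \<times> bool) hop" where
  "D_op A N w = closure_op (l2 (BP_index A N)) (fin_supp A N) (D_fin w)"

definition w_s :: "real \<Rightarrow> nat list \<Rightarrow> real" where
  "w_s s \<mu> = real (length \<mu>) powr s"

definition w_exp :: "nat list \<Rightarrow> real" where
  "w_exp \<mu> = exp (real (length \<mu>))"

end

theory Submission
  imports Defs
begin

lemma seqc:
  fixes f :: "nat \<Rightarrow> 'i::countable \<Rightarrow> 'a::metric_space"
  assumes "\<And>n i. f n i \<in> K i" "\<And>i. compact (K i)"
  shows "\<exists>r g. strict_mono r \<and> (\<forall>i. g i \<in> K i) \<and> (\<forall>i. (\<lambda>n. f (r n) i) \<longlonglongrightarrow> g i)"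
proof -
  have "compactin (product_topology (\<lambda>i. euclidean) UNIV) (PiE UNIV K)"
    by (rule compactin_PiE[THEN iffD2]) (use assms(2) in simp)
  hence "compact (PiE UNIV K)"
    by (simp only: euclidean_product_topology compactin_euclidean_iff)
  then have "seq_compact (PiE UNIV K)" by (rule compact_imp_seq_compact)
  moreover have "\<forall>n. f n \<in> PiE UNIV K" using assms(1) by (simp add: PiE_UNIV_domain)
  ultimately obtain g r where g: "g \<in> PiE UNIV K" "strict_mono r" "(f \<circ> r) \<longlonglongrightarrow> g"
    unfolding seq_compact_def by meson
  have "(\<lambda>n. f (r n) i) \<longlonglongrightarrow> g i" for i
  proof -
    have "isCont (\<lambda>x::'i\<Rightarrow>'a. x i) g"
      using continuous_on_product_coordinates[of i] continuous_on_eq_continuous_at[OF open_UNIV] by blast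
    from isCont_tendsto_compose[OF this g(3)] show ?thesis by (simp add: o_def)
  qed
  then show ?thesis using g by (auto simp: PiE_UNIV_domain Pi_iff)
qed

abbreviation sqs :: "('i \<Rightarrow> complex) \<Rightarrow> 'i \<Rightarrow> real" where
  "sqs \<phi> \<equiv> (\<lambda>x. (cmod (\<phi> x))\<^sup>2)"

lemma l2_norm_nonneg: "0 \<le> l2_norm \<phi>"
  unfolding l2_norm_def by (simp add: infsum_nonneg)

lemma l2_bound:
  assumes "\<And>F. finite F \<Longrightarrow> (\<Sum>x\<in>F. (cmod (\<phi> x))\<^sup>2) \<le> B\<^sup>2" "0 \<le> B"
  shows "sqs \<phi> summable_on UNIV" "l2_norm \<phi> \<le> B"
proof -
  show s: "sqs \<phi> summable_on UNIV"
    by (rule nonneg_bdd_above_summable_on) (use assms in \<open>auto intro!: bdd_aboveI\<close>)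
  have "infsum (sqs \<phi>) UNIV \<le> B\<^sup>2"
    by (rule infsum_le_finite_sums[OF s]) (use assms in auto)
  then show "l2_norm \<phi> \<le> B" unfolding l2_norm_def
    using assms(2) real_sqrt_le_mono by fastforce
qed

lemma l2_norm_sq: "(l2_norm \<phi>)\<^sup>2 = infsum (sqs \<phi>) UNIV"
  unfolding l2_norm_def by (simp add: infsum_nonneg)

lemma fin_le:
  assumes "sqs \<phi> summable_on UNIV" "finite F"
  shows "(\<Sum>x\<in>F. (cmod (\<phi> x))\<^sup>2) \<le> (l2_norm \<phi>)\<^sup>2"
proof -
  have "infsum (sqs \<phi>) F \<le> infsum (sqs \<phi>) UNIV"
    by (rule infsum_mono_neutral) (use assms in auto)
  then show ?thesis using assms(2) by (simp add: l2_norm_sq)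
qed

lemma pt_le:
  assumes "sqs \<phi> summable_on UNIV"
  shows "cmod (\<phi> x) \<le> l2_norm \<phi>"
proof -
  have "(cmod (\<phi> x))\<^sup>2 \<le> (l2_norm \<phi>)\<^sup>2" using fin_le[OF assms, of "{x}"] by simp
  then show ?thesis using l2_norm_nonneg power2_le_imp_le by blast
qed

lemma l2_iff: "\<phi> \<in> l2 I \<longleftrightarrow> (\<forall>x. x \<notin> I \<longrightarrow> \<phi> x = 0) \<and> sqs \<phi> summable_on UNIV"
  unfolding l2_def by simp

lemma L2_le:
  assumes "sqs \<phi> summable_on UNIV" "finite F"
  shows "L2_set (\<lambda>x. cmod (\<phi> x)) F \<le> l2_norm \<phi>"
proof -
  have "L2_set (\<lambda>x. cmod (\<phi> x)) F = sqrt (\<Sum>x\<in>F. (cmod (\<phi> x))\<^sup>2)" by (simp add: L2_set_def)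
  also have "\<dots> \<le> sqrt ((l2_norm \<phi>)\<^sup>2)" using fin_le[OF assms] real_sqrt_le_mono by blast
  also have "\<dots> = l2_norm \<phi>" by (simp add: l2_norm_nonneg)
  finally show ?thesis .
qed

lemma l2_add:
  assumes "sqs \<phi> summable_on UNIV" "sqs \<psi> summable_on UNIV"
  shows "sqs (\<lambda>x. \<phi> x + \<psi> x) summable_on UNIV \<and> l2_norm (\<lambda>x. \<phi> x + \<psi> x) \<le> l2_norm \<phi> + l2_norm \<psi>"
proof -
  have "(\<Sum>x\<in>F. (cmod (\<phi> x + \<psi> x))\<^sup>2) \<le> (l2_norm \<phi> + l2_norm \<psi>)\<^sup>2" if "finite F" for F
  proof -
    have "L2_set (\<lambda>x. cmod (\<phi> x + \<psi> x)) F \<le> L2_set (\<lambda>x. cmod (\<phi> x) + cmod (\<psi> x)) F"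
      by (rule L2_set_mono) (auto simp: norm_triangle_ineq)
    also have "\<dots> \<le> L2_set (\<lambda>x. cmod (\<phi> x)) F + L2_set (\<lambda>x. cmod (\<psi> x)) F"
      by (rule L2_set_triangle_ineq)
    also have "\<dots> \<le> l2_norm \<phi> + l2_norm \<psi>" using L2_le[OF assms(1) that] L2_le[OF assms(2) that] by simp
    finally have "L2_set (\<lambda>x. cmod (\<phi> x + \<psi> x)) F \<le> l2_norm \<phi> + l2_norm \<psi>" .
    then have "(L2_set (\<lambda>x. cmod (\<phi> x + \<psi> x)) F)\<^sup>2 \<le> (l2_norm \<phi> + l2_norm \<psi>)\<^sup>2"
      by (simp add: power_mono)
    then show ?thesis by (simp add: L2_set_def sum_nonneg)
  qed
  then show ?thesis using l2_bound[of "\<lambda>x. \<phi> x + \<psi> x"] l2_norm_nonneg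
    by (meson add_nonneg_nonneg)
qed

lemma l2_scale:
  assumes "sqs \<phi> summable_on UNIV"
  shows "sqs (\<lambda>x. a * \<phi> x) summable_on UNIV \<and> l2_norm (\<lambda>x. a * \<phi> x) \<le> cmod a * l2_norm \<phi>"
proof -
  have "(\<Sum>x\<in>F. (cmod (a * \<phi> x))\<^sup>2) \<le> (cmod a * l2_norm \<phi>)\<^sup>2" if "finite F" for F
  proof -
    have "(\<Sum>x\<in>F. (cmod (a * \<phi> x))\<^sup>2) = (cmod a)\<^sup>2 * (\<Sum>x\<in>F. (cmod (\<phi> x))\<^sup>2)"
      by (simp add: norm_mult power_mult_distrib sum_distrib_left)
    also have "\<dots> \<le> (cmod a)\<^sup>2 * (l2_norm \<phi>)\<^sup>2"
      using fin_le[OF assms that] by (simp add: mult_left_mono)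
    finally show ?thesis by (simp add: power_mult_distrib)
  qed
  then show ?thesis using l2_bound[of "\<lambda>x. a * \<phi> x"] l2_norm_nonneg
    by (meson mult_nonneg_nonneg norm_ge_zero)
qed

lemma l2_diff:
  assumes "sqs \<phi> summable_on UNIV" "sqs \<psi> summable_on UNIV"
  shows "sqs (\<lambda>x. \<phi> x - \<psi> x) summable_on UNIV \<and> l2_norm (\<lambda>x. \<phi> x - \<psi> x) \<le> l2_norm \<phi> + l2_norm \<psi>"
proof -
  have m: "sqs (\<lambda>x. (-1) * \<psi> x) summable_on UNIV \<and> l2_norm (\<lambda>x. (-1) * \<psi> x) \<le> l2_norm \<psi>"
    using l2_scale[OF assms(2), of "-1"] by simp
  have "(\<lambda>x. \<phi> x - \<psi> x) = (\<lambda>x. \<phi> x + (-1) * \<psi> x)" by auto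
  then show ?thesis using l2_add[OF assms(1) m[THEN conjunct1]] m by auto
qed

lemma l2_lin:
  assumes "\<phi> \<in> l2 I" "\<psi> \<in> l2 I"
  shows "(\<lambda>x. a * \<phi> x + \<psi> x) \<in> l2 I"
  using assms l2_add[of "\<lambda>x. a * \<phi> x" \<psi>] l2_scale[of \<phi> a] unfolding l2_iff by auto

lemma l2_sub:
  assumes "\<phi> \<in> l2 I" "\<psi> \<in> l2 I"
  shows "(\<lambda>x. \<phi> x - \<psi> x) \<in> l2 I"
  using assms l2_diff[of \<phi> \<psi>] unfolding l2_iff by auto

lemma l2_zero: "(\<lambda>x. 0) \<in> l2 I" unfolding l2_iff by simp

lemma l2_norm_zero: "l2_norm (\<lambda>x. 0) = 0" unfolding l2_norm_def by simp

lemma l2_finite_supp: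
  assumes "finite {x. \<phi> x \<noteq> 0}"
  shows "sqs \<phi> summable_on UNIV"
proof -
  have "sqs \<phi> summable_on {x. \<phi> x \<noteq> 0}" using assms by simp
  then show ?thesis
    by (rule summable_on_cong_neutral[THEN iffD1, rotated -1]) auto
qed

definition trunc :: "('i \<Rightarrow> nat) \<Rightarrow> nat \<Rightarrow> ('i \<Rightarrow> complex) \<Rightarrow> 'i \<Rightarrow> complex" where
  "trunc g n \<phi> = (\<lambda>x. if g x \<le> n then \<phi> x else 0)"

lemma tail_small:
  assumes s: "sqs \<phi> summable_on UNIV" and e: "e > 0"
  shows "\<exists>n0. \<forall>n\<ge>n0. l2_norm (\<lambda>x. trunc g n \<phi> x - \<phi> x) \<le> e"
proof -
  obtain G where G: "finite G" "dist (sum (sqs \<phi>) G) (infsum (sqs \<phi>) UNIV) \<le> e\<^sup>2"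
    using has_sum_finite_approximation[OF has_sum_infsum[OF s], of "e\<^sup>2"] e by auto
  define n0 where "n0 = Max (g ` G)"
  have "l2_norm (\<lambda>x. trunc g n \<phi> x - \<phi> x) \<le> e" if "n \<ge> n0" for n
  proof (rule l2_bound(2))
    show "0 \<le> e" using e by simp
    fix F :: "'a set" assume F: "finite F"
    let ?F = "{x\<in>F. n < g x}"
    have gx: "g x \<le> n" if "x \<in> G" for x
    proof -
      have "g x \<le> n0" unfolding n0_def using G(1) that by (intro Max_ge) auto
      then show ?thesis using \<open>n \<ge> n0\<close> by simp
    qed
    have d: "?F \<inter> G = {}" using gx by force
    have "(\<Sum>x\<in>F. (cmod (trunc g n \<phi> x - \<phi> x))\<^sup>2) = (\<Sum>x\<in>?F. (cmod (\<phi> x))\<^sup>2)"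
      using F by (intro sum.mono_neutral_cong_right) (auto simp: trunc_def)
    also have "\<dots> = (\<Sum>x\<in>?F \<union> G. (cmod (\<phi> x))\<^sup>2) - (\<Sum>x\<in>G. (cmod (\<phi> x))\<^sup>2)"
      using d F G(1) by (simp add: sum.union_disjoint)
    also have "\<dots> \<le> infsum (sqs \<phi>) UNIV - (\<Sum>x\<in>G. (cmod (\<phi> x))\<^sup>2)"
      using fin_le[OF s, of "?F \<union> G"] F G(1) by (simp add: l2_norm_sq)
    also have "\<dots> \<le> e\<^sup>2" using G(2) by (simp add: dist_real_def)
    finally show "(\<Sum>x\<in>F. (cmod (trunc g n \<phi> x - \<phi> x))\<^sup>2) \<le> e\<^sup>2" .
  qed
  then show ?thesis by blast
qed

lemma trunc_conv:
  assumes s: "sqs \<phi> summable_on UNIV"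
  shows "l2_conv (\<lambda>n. trunc g n \<phi>) \<phi>"
  unfolding l2_conv_def
proof (rule LIMSEQ_I)
  fix r :: real assume r: "0 < r"
  obtain n0 where "\<forall>n\<ge>n0. l2_norm (\<lambda>x. trunc g n \<phi> x - \<phi> x) \<le> r/2"
    using tail_small[OF s, of "r/2" g] r by auto
  then show "\<exists>no. \<forall>n\<ge>no. norm (l2_norm (\<lambda>x. trunc g n \<phi> x - \<phi> x) - 0) < r"
  proof (intro exI[of _ n0] allI impI)
    fix n assume "n0 \<le> n"
    then have "l2_norm (\<lambda>x. trunc g n \<phi> x - \<phi> x) \<le> r/2" using \<open>\<forall>n\<ge>n0. _\<close> by blast
    then show "norm (l2_norm (\<lambda>x. trunc g n \<phi> x - \<phi> x) - 0) < r"
      using r l2_norm_nonneg[of "\<lambda>x. trunc g n \<phi> x - \<phi> x"] by simp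
  qed
qed

declare l2_norm_nonneg[simp]

definition flp :: "'a \<times> bool \<Rightarrow> 'a \<times> bool" where "flp x = (fst x, \<not> snd x)"

lemma flp_flp[simp]: "flp (flp x) = x" by (simp add: flp_def)
lemma fst_flp[simp]: "fst (flp x) = fst x" by (simp add: flp_def)
lemma inj_flp: "inj_on flp A" by (metis flp_flp inj_on_inverseI)

definition blk :: "('a \<times> bool \<Rightarrow> complex) \<Rightarrow> ('a \<times> bool \<Rightarrow> complex) \<Rightarrow> ('a \<times> bool) hop" where
  "blk \<alpha> \<beta> \<phi> = (\<lambda>x. \<alpha> x * \<phi> x + \<beta> x * \<phi> (flp x))"

lemma sq_sum_le: "(a + b)\<^sup>2 \<le> 2 * a\<^sup>2 + 2 * (b::real)\<^sup>2"
proof -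
  have "0 \<le> (a - b)\<^sup>2" by simp
  then show ?thesis by (simp add: power2_eq_square algebra_simps)
qed

lemma blk_finsum:
  assumes s: "sqs \<phi> summable_on UNIV" and F: "finite F" and K: "0 \<le> K"
    and b: "\<forall>x\<in>F. cmod (\<alpha> x) \<le> K \<and> cmod (\<beta> x) \<le> K"
  shows "(\<Sum>x\<in>F. (cmod (blk \<alpha> \<beta> \<phi> x))\<^sup>2) \<le> (2*K*l2_norm \<phi>)\<^sup>2"
proof -
  have pt: "(cmod (blk \<alpha> \<beta> \<phi> x))\<^sup>2 \<le> 2*K\<^sup>2 * ((cmod (\<phi> x))\<^sup>2 + (cmod (\<phi> (flp x)))\<^sup>2)" if "x \<in> F" for x
  proof -
    have "cmod (blk \<alpha> \<beta> \<phi> x) \<le> K * cmod (\<phi> x) + K * cmod (\<phi> (flp x))"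
    proof -
      have "cmod (blk \<alpha> \<beta> \<phi> x) \<le> cmod (\<alpha> x) * cmod (\<phi> x) + cmod (\<beta> x) * cmod (\<phi> (flp x))"
      proof -
        have "cmod (\<alpha> x * \<phi> x + \<beta> x * \<phi> (flp x)) \<le> cmod (\<alpha> x * \<phi> x) + cmod (\<beta> x * \<phi> (flp x))"
          by (rule norm_triangle_ineq)
        then show ?thesis by (simp add: blk_def norm_mult)
      qed
      also have "\<dots> \<le> K * cmod (\<phi> x) + K * cmod (\<phi> (flp x))"
        using b that by (intro add_mono mult_right_mono) auto
      finally show ?thesis .
    qed
    then have "(cmod (blk \<alpha> \<beta> \<phi> x))\<^sup>2 \<le> (K * cmod (\<phi> x) + K * cmod (\<phi> (flp x)))\<^sup>2"
      by (simp add: power_mono)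
    also have "\<dots> \<le> 2 * (K * cmod (\<phi> x))\<^sup>2 + 2 * (K * cmod (\<phi> (flp x)))\<^sup>2" by (rule sq_sum_le)
    finally show ?thesis by (simp add: power_mult_distrib algebra_simps)
  qed
  have "(\<Sum>x\<in>F. (cmod (blk \<alpha> \<beta> \<phi> x))\<^sup>2) \<le> (\<Sum>x\<in>F. 2*K\<^sup>2 * ((cmod (\<phi> x))\<^sup>2 + (cmod (\<phi> (flp x)))\<^sup>2))"
    using pt by (rule sum_mono)
  also have "\<dots> = 2*K\<^sup>2 * ((\<Sum>x\<in>F. (cmod (\<phi> x))\<^sup>2) + (\<Sum>x\<in>F. (cmod (\<phi> (flp x)))\<^sup>2))"
    by (simp only: sum.distrib[symmetric] sum_distrib_left)
  also have "(\<Sum>x\<in>F. (cmod (\<phi> (flp x)))\<^sup>2) = (\<Sum>x\<in>flp ` F. (cmod (\<phi> x))\<^sup>2)"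
    by (simp add: sum.reindex inj_flp)
  also have "2*K\<^sup>2 * ((\<Sum>x\<in>F. (cmod (\<phi> x))\<^sup>2) + (\<Sum>x\<in>flp ` F. (cmod (\<phi> x))\<^sup>2))
      \<le> 2*K\<^sup>2 * ((l2_norm \<phi>)\<^sup>2 + (l2_norm \<phi>)\<^sup>2)"
    using fin_le[OF s F] fin_le[OF s finite_imageI[OF F, of flp]]
    by (intro mult_left_mono add_mono) auto
  also have "\<dots> = (2*K*l2_norm \<phi>)\<^sup>2" by (simp add: power_mult_distrib)
  finally show ?thesis .
qed

lemma blk_out: "\<phi> \<in> l2 (X \<times> UNIV) \<Longrightarrow> x \<notin> X \<times> UNIV \<Longrightarrow> blk \<alpha> \<beta> \<phi> x = 0"
  unfolding blk_def l2_def flp_def by (cases x) auto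

lemma blk_H:
  assumes \<phi>: "\<phi> \<in> l2 (X \<times> UNIV)" and K: "0 \<le> K"
    and b: "\<forall>x\<in>X \<times> UNIV. cmod (\<alpha> x) \<le> K \<and> cmod (\<beta> x) \<le> K"
  shows "blk \<alpha> \<beta> \<phi> \<in> l2 (X \<times> UNIV) \<and> l2_norm (blk \<alpha> \<beta> \<phi>) \<le> 2*K*l2_norm \<phi>"
proof -
  have s: "sqs \<phi> summable_on UNIV" using \<phi> by (simp add: l2_iff)
  have fs: "(\<Sum>x\<in>F. (cmod (blk \<alpha> \<beta> \<phi> x))\<^sup>2) \<le> (2*K*l2_norm \<phi>)\<^sup>2" if F: "finite F" for F
  proof -
    have "(\<Sum>x\<in>F. (cmod (blk \<alpha> \<beta> \<phi> x))\<^sup>2) = (\<Sum>x\<in>F \<inter> (X \<times> UNIV). (cmod (blk \<alpha> \<beta> \<phi> x))\<^sup>2)"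
      using F blk_out[OF \<phi>] by (intro sum.mono_neutral_right) auto
    also have "\<dots> \<le> (2*K*l2_norm \<phi>)\<^sup>2"
      using F b by (intro blk_finsum[OF s _ K]) auto
    finally show ?thesis .
  qed
  have "0 \<le> 2*K*l2_norm \<phi>" using mult_nonneg_nonneg[OF K l2_norm_nonneg, of \<phi>] by simp
  then show ?thesis using l2_bound[OF fs] blk_out[OF \<phi>] by (auto simp: l2_iff)
qed

lemma blk_lin: "blk \<alpha> \<beta> (\<lambda>x. a * \<phi> x + \<psi> x) = (\<lambda>x. a * blk \<alpha> \<beta> \<phi> x + blk \<alpha> \<beta> \<psi> x)"
  by (simp add: blk_def fun_eq_iff algebra_simps)

lemma blk_bdd:
  assumes K: "0 \<le> K" and b: "\<forall>x\<in>X \<times> UNIV. cmod (\<alpha> x) \<le> K \<and> cmod (\<beta> x) \<le> K"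
  shows "bdd_op (l2 (X \<times> UNIV)) (blk \<alpha> \<beta>)"
  unfolding bdd_op_def using blk_H[OF _ K b] blk_lin by blast

lemma blk_cpt:
  fixes X :: "'a::countable set" and g :: "'a \<Rightarrow> nat"
  assumes fin: "\<And>n. finite {a\<in>X. g a \<le> n}"
    and K: "0 \<le> K" and b: "\<forall>x\<in>X \<times> UNIV. cmod (\<alpha> x) \<le> K \<and> cmod (\<beta> x) \<le> K"
    and dec: "\<And>e. e > 0 \<Longrightarrow> \<exists>n. \<forall>x\<in>X \<times> UNIV. n < g (fst x) \<longrightarrow> cmod (\<alpha> x) \<le> e \<and> cmod (\<beta> x) \<le> e"
  shows "cpt_op (l2 (X \<times> UNIV)) (blk \<alpha> \<beta>)"
  unfolding cpt_op_def
proof (intro conjI allI impI)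
  let ?H = "l2 (X \<times> (UNIV::bool set))"
  show "bdd_op ?H (blk \<alpha> \<beta>)" by (rule blk_bdd[OF K b])
  fix f :: "nat \<Rightarrow> 'a \<times> bool \<Rightarrow> complex"
  assume f: "(\<forall>n. f n \<in> ?H) \<and> bounded (range (\<lambda>n. l2_norm (f n)))"
  obtain B where B: "\<forall>n. l2_norm (f n) \<le> B"
    using f unfolding bounded_iff by (metis abs_le_D1 rangeI real_norm_def)
  have B0: "0 \<le> B" using B l2_norm_nonneg order_trans by blast
  have fs: "sqs (f n) summable_on UNIV" for n using f by (simp add: l2_iff)
  have "cmod (f n i) \<le> B" for n i using pt_le[OF fs, of n i] B by (meson order_trans)
  then have "\<forall>n i. f n i \<in> cball 0 B" by simp
  obtain r g0 where r: "strict_mono r" and g0K: "\<forall>i. g0 i \<in> cball 0 B"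
    and conv: "\<forall>i. (\<lambda>n. f (r n) i) \<longlonglongrightarrow> g0 i"
  proof -
    have "\<exists>r g. strict_mono r \<and> (\<forall>i. g i \<in> cball 0 B) \<and> (\<forall>i. (\<lambda>n. f (r n) i) \<longlonglongrightarrow> g i)"
      using \<open>\<forall>n i. f n i \<in> cball 0 B\<close> by (intro seqc) auto
    then show ?thesis using that by blast
  qed
  have g0out: "g0 x = 0" if "x \<notin> X \<times> UNIV" for x
  proof -
    have "(\<lambda>n. f (r n) x) = (\<lambda>n. 0)" using f that by (cases x) (auto simp: l2_iff)
    then have "(\<lambda>n. 0) \<longlonglongrightarrow> g0 x" using conv by metis
    from LIMSEQ_unique[OF this tendsto_const] show ?thesis by simp
  qed
  have g0fin: "(\<Sum>x\<in>F. (cmod (g0 x))\<^sup>2) \<le> B\<^sup>2" if "finite F" for F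
  proof -
    have "(\<lambda>n. \<Sum>x\<in>F. (cmod (f (r n) x))\<^sup>2) \<longlonglongrightarrow> (\<Sum>x\<in>F. (cmod (g0 x))\<^sup>2)"
      using conv by (intro tendsto_intros) auto
    moreover have "(\<Sum>x\<in>F. (cmod (f (r n) x))\<^sup>2) \<le> B\<^sup>2" for n
      using fin_le[OF fs that, of "r n"] B l2_norm_nonneg
      by (meson order_trans power_mono)
    ultimately show ?thesis by (intro LIMSEQ_le_const2) auto
  qed
  have g0H: "g0 \<in> ?H" using l2_bound(1)[OF g0fin B0] g0out by (auto simp: l2_iff)
  define h where "h n = (\<lambda>x. f (r n) x - g0 x)" for n
  have hH: "h n \<in> ?H" for n unfolding h_def using f g0H by (intro l2_sub) auto
  have hn: "l2_norm (h n) \<le> 2*B" for n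
  proof -
    have "l2_norm (h n) \<le> l2_norm (f (r n)) + l2_norm g0"
      using l2_diff[OF fs[of "r n"], of g0] g0H unfolding h_def l2_iff by blast
    also have "\<dots> \<le> B + B" using B l2_bound(2)[OF g0fin B0] by (intro add_mono) auto
    finally show ?thesis by simp
  qed
  have hconv: "(\<lambda>n. h n x) \<longlonglongrightarrow> 0" for x
    using tendsto_diff[OF conv[rule_format, of x] tendsto_const[of "g0 x"]] by (simp add: h_def)
  have eq: "(\<lambda>x. blk \<alpha> \<beta> (f (r n)) x - blk \<alpha> \<beta> g0 x) = blk \<alpha> \<beta> (h n)" for n
    by (simp add: h_def blk_def fun_eq_iff algebra_simps)
  have "(\<lambda>n. l2_norm (blk \<alpha> \<beta> (h n))) \<longlonglongrightarrow> 0"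
  proof (rule LIMSEQ_I)
    fix \<epsilon> :: real assume \<epsilon>: "0 < \<epsilon>"
    define e' where "e' = \<epsilon> / (8 * (B + 1))"
    have e': "0 < e'" using \<epsilon> B0 by (simp add: e'_def)
    obtain m where m: "\<forall>x\<in>X \<times> UNIV. m < g (fst x) \<longrightarrow> cmod (\<alpha> x) \<le> e' \<and> cmod (\<beta> x) \<le> e'"
      using dec[OF e'] by blast
    define J where "J = {a\<in>X. g a \<le> m} \<times> (UNIV :: bool set)"
    have Jfin: "finite J" using fin unfolding J_def by simp
    have "(\<lambda>n. \<Sum>x\<in>J. (cmod (blk \<alpha> \<beta> (h n) x))\<^sup>2) \<longlonglongrightarrow> (\<Sum>x\<in>J. (cmod (\<alpha> x * 0 + \<beta> x * 0))\<^sup>2)"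
      unfolding blk_def using hconv by (intro tendsto_intros) auto
    then have "(\<lambda>n. \<Sum>x\<in>J. (cmod (blk \<alpha> \<beta> (h n) x))\<^sup>2) \<longlonglongrightarrow> 0" by simp
    then have "\<forall>\<^sub>F n in sequentially. (\<Sum>x\<in>J. (cmod (blk \<alpha> \<beta> (h n) x))\<^sup>2) < \<epsilon>\<^sup>2/4"
      using \<epsilon> by (intro order_tendstoD(2)) auto
    then obtain n0 where n0: "\<forall>n\<ge>n0. (\<Sum>x\<in>J. (cmod (blk \<alpha> \<beta> (h n) x))\<^sup>2) < \<epsilon>\<^sup>2/4"
      unfolding eventually_sequentially by blast
    show "\<exists>no. \<forall>n\<ge>no. norm (l2_norm (blk \<alpha> \<beta> (h n)) - 0) < \<epsilon>"
    proof (intro exI[of _ n0] allI impI)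
      fix n assume n: "n0 \<le> n"
      have hs: "sqs (h n) summable_on UNIV" using hH by (simp add: l2_iff)
      have "(\<Sum>x\<in>F. (cmod (blk \<alpha> \<beta> (h n) x))\<^sup>2) \<le> (3/4*\<epsilon>)\<^sup>2" if F: "finite F" for F
      proof -
        have Jle: "(\<Sum>x\<in>J. (cmod (blk \<alpha> \<beta> (h n) x))\<^sup>2) \<le> \<epsilon>\<^sup>2/4" using n0 n by (simp add: less_imp_le)
        have "(\<Sum>x\<in>F. (cmod (blk \<alpha> \<beta> (h n) x))\<^sup>2) = (\<Sum>x\<in>F \<inter> J. (cmod (blk \<alpha> \<beta> (h n) x))\<^sup>2)
             + (\<Sum>x\<in>F - J. (cmod (blk \<alpha> \<beta> (h n) x))\<^sup>2)"
          using F by (metis sum.Int_Diff)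
        also have "(\<Sum>x\<in>F \<inter> J. (cmod (blk \<alpha> \<beta> (h n) x))\<^sup>2) \<le> (\<Sum>x\<in>J. (cmod (blk \<alpha> \<beta> (h n) x))\<^sup>2)"
          using Jfin by (intro sum_mono2) auto
        also have "(\<Sum>x\<in>F - J. (cmod (blk \<alpha> \<beta> (h n) x))\<^sup>2) = (\<Sum>x\<in>(F - J) \<inter> (X \<times> UNIV). (cmod (blk \<alpha> \<beta> (h n) x))\<^sup>2)"
        proof (rule sum.mono_neutral_right)
          show "\<forall>i\<in>(F - J) - (F - J) \<inter> (X \<times> UNIV). (cmod (blk \<alpha> \<beta> (h n) i))\<^sup>2 = 0"
          proof
            fix i assume "i \<in> (F - J) - (F - J) \<inter> (X \<times> UNIV)"
            then have "i \<notin> X \<times> UNIV" by blast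
            then show "(cmod (blk \<alpha> \<beta> (h n) i))\<^sup>2 = 0" using blk_out[OF hH, of i] by simp
          qed
        qed (use F in auto)
        also have "\<dots> \<le> (2*e'*l2_norm (h n))\<^sup>2"
          using F m e' by (intro blk_finsum[OF hs]) (auto simp: J_def)
        also have "\<dots> \<le> (2*e'*(2*B))\<^sup>2"
          using hn e' by (intro power_mono mult_left_mono) (auto simp: less_imp_le)
        also have "(2*e'*(2*B))\<^sup>2 \<le> \<epsilon>\<^sup>2/4"
        proof -
          have "2*e'*(2*B) \<le> \<epsilon>/2" unfolding e'_def using B0 \<epsilon>
            by (simp add: field_simps)
          then have "(2*e'*(2*B))\<^sup>2 \<le> (\<epsilon>/2)\<^sup>2" using e' B0 by (intro power_mono) auto
          then show ?thesis by (simp add: power_divide)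
        qed
        also note Jle
        finally have "(\<Sum>x\<in>F. (cmod (blk \<alpha> \<beta> (h n) x))\<^sup>2) \<le> \<epsilon>\<^sup>2/4 + \<epsilon>\<^sup>2/4"
          by linarith
        also have "\<dots> \<le> (3/4*\<epsilon>)\<^sup>2"
        proof -
          have "0 \<le> \<epsilon>*\<epsilon>" by simp
          then show ?thesis by (simp add: power2_eq_square algebra_simps)
        qed
        finally show ?thesis .
      qed
      then have "l2_norm (blk \<alpha> \<beta> (h n)) \<le> 3/4*\<epsilon>" using \<epsilon> by (intro l2_bound(2)) auto
      then show "norm (l2_norm (blk \<alpha> \<beta> (h n)) - 0) < \<epsilon>" using \<epsilon> l2_norm_nonneg[of "blk \<alpha> \<beta> (h n)"] by simp
    qed
  qed
  then have "l2_conv (\<lambda>n. blk \<alpha> \<beta> (f (r n))) (blk \<alpha> \<beta> g0)"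
    unfolding l2_conv_def eq .
  moreover have "blk \<alpha> \<beta> g0 \<in> ?H" using blk_H[OF g0H K b] by blast
  ultimately show "\<exists>r \<psi>. strict_mono r \<and> \<psi> \<in> ?H \<and> l2_conv (\<lambda>n. blk \<alpha> \<beta> (f (r n))) \<psi>"
    using r by blast
qed

lemma hop_norm_le:
  assumes "\<forall>\<phi>\<in>H. l2_norm (T \<phi>) \<le> c * l2_norm \<phi>" "0 \<le> c" "(\<lambda>x. 0) \<in> H"
  shows "hop_norm H T \<le> c"
  unfolding hop_norm_def
proof (rule cSup_least)
  have "l2_norm (T (\<lambda>x. 0)) \<in> {l2_norm (T \<phi>) |\<phi>. \<phi> \<in> H \<and> l2_norm \<phi> \<le> 1}"
    using assms(3) by (intro CollectI exI[of _ "\<lambda>x. 0"]) (simp add: l2_norm_zero)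
  then show "{l2_norm (T \<phi>) |\<phi>. \<phi> \<in> H \<and> l2_norm \<phi> \<le> 1} \<noteq> {}" by blast
  fix y assume "y \<in> {l2_norm (T \<phi>) |\<phi>. \<phi> \<in> H \<and> l2_norm \<phi> \<le> 1}"
  then obtain \<phi> where "\<phi> \<in> H" "l2_norm \<phi> \<le> 1" "y = l2_norm (T \<phi>)" by blast
  then show "y \<le> c" using assms(1,2) by (metis mult_left_le order_trans)
qed

lemma hop_norm_nonneg:
  assumes "\<forall>\<phi>\<in>H. l2_norm (T \<phi>) \<le> K * l2_norm \<phi>" "(\<lambda>x. 0) \<in> H"
  shows "0 \<le> hop_norm H T"
  unfolding hop_norm_def
proof (rule cSup_upper2)
  show "l2_norm (T (\<lambda>x. 0)) \<in> {l2_norm (T \<phi>) |\<phi>. \<phi> \<in> H \<and> l2_norm \<phi> \<le> 1}"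
    using assms(2) by (intro CollectI exI[of _ "\<lambda>x. 0"]) (simp add: l2_norm_zero)
  show "0 \<le> l2_norm (T (\<lambda>x. 0))" by simp
  show "bdd_above {l2_norm (T \<phi>) |\<phi>. \<phi> \<in> H \<and> l2_norm \<phi> \<le> 1}"
  proof (rule bdd_aboveI)
    fix y assume "y \<in> {l2_norm (T \<phi>) |\<phi>. \<phi> \<in> H \<and> l2_norm \<phi> \<le> 1}"
    then obtain \<phi> where p: "\<phi> \<in> H" "l2_norm \<phi> \<le> 1" "y = l2_norm (T \<phi>)" by blast
    have "y \<le> K * l2_norm \<phi>" using assms(1) p by auto
    also have "\<dots> \<le> \<bar>K\<bar> * l2_norm \<phi>" by (intro mult_right_mono) auto
    also have "\<dots> \<le> \<bar>K\<bar>" using p(2) by (simp add: mult_left_le)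
    finally show "y \<le> \<bar>K\<bar>" .
  qed
qed

lemma bdd_diff_bound:
  assumes "bdd_op (l2 I) T" "bdd_op (l2 I) F"
  shows "\<exists>K. \<forall>\<phi>\<in>l2 I. l2_norm (\<lambda>x. T \<phi> x - F \<phi> x) \<le> K * l2_norm \<phi>"
proof -
  obtain K1 where K1: "\<forall>\<phi>\<in>l2 I. l2_norm (T \<phi>) \<le> K1 * l2_norm \<phi>" using assms(1) unfolding bdd_op_def by blast
  obtain K2 where K2: "\<forall>\<phi>\<in>l2 I. l2_norm (F \<phi>) \<le> K2 * l2_norm \<phi>" using assms(2) unfolding bdd_op_def by blast
  have "l2_norm (\<lambda>x. T \<phi> x - F \<phi> x) \<le> (K1 + K2) * l2_norm \<phi>" if "\<phi> \<in> l2 I" for \<phi>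
  proof -
    have "T \<phi> \<in> l2 I" "F \<phi> \<in> l2 I" using assms that unfolding bdd_op_def by auto
    then have "l2_norm (\<lambda>x. T \<phi> x - F \<phi> x) \<le> l2_norm (T \<phi>) + l2_norm (F \<phi>)"
      using l2_diff unfolding l2_iff by blast
    also have "\<dots> \<le> K1 * l2_norm \<phi> + K2 * l2_norm \<phi>" using K1 K2 that by (intro add_mono) auto
    finally show ?thesis by (simp add: algebra_simps)
  qed
  then show ?thesis by blast
qed

lemma zero_rank: "rank_le_op (l2 I) k (\<lambda>\<phi> x. 0)"
  unfolding rank_le_op_def bdd_op_def
  by (intro conjI exI[of _ "[]"] exI[of _ 0]) (auto simp: l2_zero l2_norm_zero)

lemma sing_val_set_nonneg:
  assumes "bdd_op (l2 I) T" "rank_le_op (l2 I) k F"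
  shows "0 \<le> hop_norm (l2 I) (\<lambda>\<phi> x. T \<phi> x - F \<phi> x)"
proof -
  have "bdd_op (l2 I) F" using assms(2) unfolding rank_le_op_def by blast
  then obtain K where "\<forall>\<phi>\<in>l2 I. l2_norm (\<lambda>x. T \<phi> x - F \<phi> x) \<le> K * l2_norm \<phi>"
    using bdd_diff_bound[OF assms(1)] by blast
  then show ?thesis by (intro hop_norm_nonneg[of _ _ K]) (auto simp: l2_zero)
qed

lemma sing_val_nonneg:
  assumes "bdd_op (l2 I) T"
  shows "0 \<le> sing_val (l2 I) T k"
  unfolding sing_val_def
proof (rule cInf_greatest)
  show "{hop_norm (l2 I) (\<lambda>\<phi> x. T \<phi> x - F \<phi> x) |F. rank_le_op (l2 I) k F} \<noteq> {}"
    using zero_rank by blast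
  fix y assume "y \<in> {hop_norm (l2 I) (\<lambda>\<phi> x. T \<phi> x - F \<phi> x) |F. rank_le_op (l2 I) k F}"
  then show "0 \<le> y" using sing_val_set_nonneg[OF assms] by blast
qed

lemma sing_val_le:
  assumes "bdd_op (l2 I) T" "rank_le_op (l2 I) k F"
  shows "sing_val (l2 I) T k \<le> hop_norm (l2 I) (\<lambda>\<phi> x. T \<phi> x - F \<phi> x)"
  unfolding sing_val_def
proof (rule cInf_lower)
  show "hop_norm (l2 I) (\<lambda>\<phi> x. T \<phi> x - F \<phi> x) \<in> {hop_norm (l2 I) (\<lambda>\<phi> x. T \<phi> x - F \<phi> x) |F. rank_le_op (l2 I) k F}"
    using assms(2) by blast
  show "bdd_below {hop_norm (l2 I) (\<lambda>\<phi> x. T \<phi> x - F \<phi> x) |F. rank_le_op (l2 I) k F}"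
    using sing_val_set_nonneg[OF assms(1)] by (intro bdd_belowI[of _ 0]) blast
qed

lemma sum_nth_delta:
  "distinct js \<Longrightarrow> (\<Sum>j<length js. c (js!j) * (if x = js!j then 1 else 0)) = (if x \<in> set js then c x else (0::complex))"
proof (induction js)
  case Nil then show ?case by simp
next
  case (Cons a js)
  have "(\<Sum>j<length (a # js). c ((a#js)!j) * (if x = (a#js)!j then 1 else 0))
      = c a * (if x = a then 1 else 0) + (\<Sum>j<length js. c (js!j) * (if x = js!j then 1 else 0))"
    by (simp only: length_Cons sum.lessThan_Suc_shift nth_Cons_0 nth_Cons_Suc)
  also have "\<dots> = (if x \<in> set (a#js) then c x else 0)" using Cons by auto
  finally show ?case .
qed

lemma rank_fin:
  assumes "bdd_op (l2 I) F" "finite J" "J \<subseteq> I" "card J \<le> k"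
    "\<forall>\<phi>\<in>l2 I. \<forall>x. x \<notin> J \<longrightarrow> F \<phi> x = 0"
  shows "rank_le_op (l2 I) k F"
proof -
  obtain js where js: "set js = J" "distinct js" using finite_distinct_list[OF assms(2)] by blast
  define vs where "vs = map (\<lambda>j x. if x = j then 1 else (0::complex)) js"
  have len: "length vs \<le> k" using js assms(4) distinct_card[OF js(2)] by (simp add: vs_def)
  have "(\<lambda>x. if x = j then 1 else (0::complex)) \<in> l2 I" if "j \<in> J" for j
  proof -
    have "finite {x. (if x = j then 1 else (0::complex)) \<noteq> 0}" by simp
    then show ?thesis using that assms(3) l2_finite_supp unfolding l2_iff by auto
  qed
  then have vsH: "set vs \<subseteq> l2 I" using js by (auto simp: vs_def)
  have "\<exists>c. F \<phi> = (\<lambda>x. \<Sum>j<length vs. c j * (vs ! j) x)" if "\<phi> \<in> l2 I" for \<phi>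
  proof (intro exI[of _ "\<lambda>j. F \<phi> (js!j)"] ext)
    fix x
    have "(\<Sum>j<length vs. F \<phi> (js!j) * (vs ! j) x) = (\<Sum>j<length js. F \<phi> (js!j) * (if x = js!j then 1 else 0))"
      by (simp add: vs_def)
    also have "\<dots> = (if x \<in> set js then F \<phi> x else 0)" by (rule sum_nth_delta[OF js(2)])
    also have "\<dots> = F \<phi> x" using assms(5) that js(1) by auto
    finally show "F \<phi> x = (\<Sum>j<length vs. F \<phi> (js!j) * (vs ! j) x)" by simp
  qed
  then show ?thesis unfolding rank_le_op_def using assms(1) len vsH by blast
qed

lemma blk_sing:
  fixes X :: "'a set" and g :: "'a \<Rightarrow> nat"
  assumes fin: "finite {a\<in>X. g a \<le> n}" and card: "card ({a\<in>X. g a \<le> n} \<times> (UNIV::bool set)) \<le> k"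
    and K: "0 \<le> K" "\<forall>x\<in>X \<times> UNIV. cmod (\<alpha> x) \<le> K \<and> cmod (\<beta> x) \<le> K"
    and e: "0 \<le> e" "\<forall>x\<in>X \<times> UNIV. n < g (fst x) \<longrightarrow> cmod (\<alpha> x) \<le> e \<and> cmod (\<beta> x) \<le> e"
  shows "sing_val (l2 (X \<times> UNIV)) (blk \<alpha> \<beta>) k \<le> 2*e"
proof -
  let ?H = "l2 (X \<times> (UNIV::bool set))"
  define \<alpha>n where "\<alpha>n x = (if g (fst x) \<le> n then \<alpha> x else 0)" for x
  define \<beta>n where "\<beta>n x = (if g (fst x) \<le> n then \<beta> x else 0)" for x
  define \<alpha>t where "\<alpha>t x = (if g (fst x) \<le> n then 0 else \<alpha> x)" for x
  define \<beta>t where "\<beta>t x = (if g (fst x) \<le> n then 0 else \<beta> x)" for x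
  define J where "J = {a\<in>X. g a \<le> n} \<times> (UNIV::bool set)"
  have bF: "bdd_op ?H (blk \<alpha>n \<beta>n)" using K by (intro blk_bdd[of K]) (auto simp: \<alpha>n_def \<beta>n_def)
  have supp: "\<forall>\<phi>\<in>?H. \<forall>x. x \<notin> J \<longrightarrow> blk \<alpha>n \<beta>n \<phi> x = 0"
  proof (intro ballI allI impI)
    fix \<phi> x assume \<phi>: "\<phi> \<in> ?H" and x: "x \<notin> J"
    show "blk \<alpha>n \<beta>n \<phi> x = 0"
    proof (cases "x \<in> X \<times> UNIV")
      case True
      then have "\<not> g (fst x) \<le> n" using x by (auto simp: J_def)
      then show ?thesis by (simp add: blk_def \<alpha>n_def \<beta>n_def)
    next
      case False then show ?thesis using blk_out[OF \<phi>] by blast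
    qed
  qed
  have rk: "rank_le_op ?H k (blk \<alpha>n \<beta>n)"
    by (rule rank_fin[OF bF _ _ _ supp]) (use fin card in \<open>auto simp: J_def\<close>)
  have eq: "(\<lambda>\<phi> x. blk \<alpha> \<beta> \<phi> x - blk \<alpha>n \<beta>n \<phi> x) = blk \<alpha>t \<beta>t"
    by (simp add: blk_def \<alpha>n_def \<beta>n_def \<alpha>t_def \<beta>t_def fun_eq_iff)
  have bt: "\<forall>x\<in>X \<times> UNIV. cmod (\<alpha>t x) \<le> e \<and> cmod (\<beta>t x) \<le> e"
    using e by (auto simp: \<alpha>t_def \<beta>t_def)
  have "hop_norm ?H (blk \<alpha>t \<beta>t) \<le> 2*e"
    using blk_H[OF _ e(1) bt] e(1) by (intro hop_norm_le) (auto simp: l2_zero)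
  moreover have "sing_val ?H (blk \<alpha> \<beta>) k \<le> hop_norm ?H (blk \<alpha>t \<beta>t)"
    using sing_val_le[OF blk_bdd[OF K] rk] unfolding eq .
  ultimately show ?thesis by simp
qed

lemma seqdist_nonneg: "0 \<le> seqdist x y"
  by (simp add: seqdist_def)

lemma seqdist_agree:
  assumes "\<forall>j<k. x j = y j"
  shows "seqdist x y \<le> exp (-(real k + 1))"
proof (cases "x = y")
  case True then show ?thesis by (simp add: seqdist_def)
next
  case False
  then obtain j where "x j \<noteq> y j" by auto
  then have L: "x (LEAST n. x n \<noteq> y n) \<noteq> y (LEAST n. x n \<noteq> y n)" by (rule LeastI)
  have "k \<le> (LEAST n. x n \<noteq> y n)"
  proof (rule ccontr)
    assume "\<not> k \<le> (LEAST n. x n \<noteq> y n)"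
    then show False using assms L by auto
  qed
  then show ?thesis using False by (simp add: seqdist_def)
qed

lemma dist_small:
  assumes "seqdist x y < exp (- real m)" "j < m"
  shows "x j = y j"
proof (rule ccontr)
  assume ne: "x j \<noteq> y j"
  then have xy: "x \<noteq> y" by auto
  have "(LEAST n. x n \<noteq> y n) \<le> j" using ne by (rule Least_le)
  then have "exp (- real m) \<le> exp (-(real (LEAST n. x n \<noteq> y n) + 1))" using assms(2) by simp
  then show False using assms(1) xy by (simp add: seqdist_def)
qed

lemma Omega_seqc:
  fixes x :: "nat \<Rightarrow> nat \<Rightarrow> nat"
  assumes "\<forall>n. x n \<in> Omega A N"
  shows "\<exists>r z. strict_mono r \<and> z \<in> Omega A N \<and> (\<forall>k. eventually (\<lambda>n. \<forall>j<k. x (r n) j = z j) sequentially)"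
proof -
  have "\<forall>n i. real (x n i) \<in> real ` {..<N}" using assms by (auto simp: Omega_def)
  then have "\<exists>r g. strict_mono r \<and> (\<forall>i. g i \<in> real ` {..<N}) \<and> (\<forall>i. (\<lambda>n. real (x (r n) i)) \<longlonglongrightarrow> g i)"
    using seqc[of "\<lambda>n i. real (x n i)" "\<lambda>_. real ` {..<N}"] by (simp add: finite_imp_compact)
  then obtain r g where r: "strict_mono r" "\<forall>i. g i \<in> real ` {..<N}" "\<forall>i. (\<lambda>n. real (x (r n) i)) \<longlonglongrightarrow> g i"
    by blast
  define z where "z i = (SOME k. k < N \<and> g i = real k)" for i
  have z: "z i < N \<and> g i = real (z i)" for i
  proof -
    obtain k where "k < N" "g i = real k" using r(2) by blast
    then show ?thesis unfolding z_def by (rule someI[of _ k, OF conjI])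
  qed
  have ev: "eventually (\<lambda>n. x (r n) i = z i) sequentially" for i
  proof -
    have "eventually (\<lambda>n. dist (real (x (r n) i)) (g i) < 1/2) sequentially"
      using r(3) by (intro tendstoD) auto
    then show ?thesis
    proof (rule eventually_mono)
      fix n assume "dist (real (x (r n) i)) (g i) < 1/2"
      then have "\<bar>real (x (r n) i) - real (z i)\<bar> < 1/2" using z by (simp add: dist_real_def)
      then show "x (r n) i = z i" by linarith
    qed
  qed
  have evk: "eventually (\<lambda>n. \<forall>j<k. x (r n) j = z j) sequentially" for k
  proof -
    have "eventually (\<lambda>n. \<forall>j\<in>{..<k}. x (r n) j = z j) sequentially"
      by (rule eventually_ball_finite) (auto simp: ev)
    then show ?thesis by (auto elim!: eventually_mono)
  qed
  have "A (z i) (z (Suc i))" for i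
  proof -
    have "eventually (\<lambda>n. x (r n) i = z i \<and> x (r n) (Suc i) = z (Suc i)) sequentially"
      using ev[of i] ev[of "Suc i"] by (rule eventually_conj)
    then obtain n where n: "x (r n) i = z i" "x (r n) (Suc i) = z (Suc i)"
      unfolding eventually_sequentially by blast
    have "A (x (r n) i) (x (r n) (Suc i))" using assms by (simp add: Omega_def)
    then show ?thesis using n by simp
  qed
  then have "z \<in> Omega A N" using z by (auto simp: Omega_def)
  then show ?thesis using r(1) evk by blast
qed

lemma Cont_uc:
  assumes b: "b \<in> Cont A N" and e: "e > 0"
  shows "\<exists>m. \<forall>x\<in>Omega A N. \<forall>y\<in>Omega A N. (\<forall>j<m. x j = y j) \<longrightarrow> cmod (b x - b y) < e"
proof (rule ccontr)
  assume "\<not> ?thesis"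
  then have "\<forall>m. \<exists>x y. x \<in> Omega A N \<and> y \<in> Omega A N \<and> (\<forall>j<m. x j = y j) \<and> \<not> cmod (b x - b y) < e"
    by blast
  then obtain xs ys where xy: "\<forall>m. xs m \<in> Omega A N \<and> ys m \<in> Omega A N \<and> (\<forall>j<m. xs m j = ys m j) \<and> \<not> cmod (b (xs m) - b (ys m)) < e"
    by metis
  then obtain r z where rz: "strict_mono r" "z \<in> Omega A N" "\<forall>k. eventually (\<lambda>n. \<forall>j<k. xs (r n) j = z j) sequentially"
    using Omega_seqc[of xs A N] by blast
  have c: "\<forall>x\<in>Omega A N. \<forall>e>0. \<exists>d>0. \<forall>y\<in>Omega A N. seqdist x y < d \<longrightarrow> cmod (b y - b x) < e"
    using b by (simp add: Cont_def)
  have "\<exists>d>0. \<forall>y\<in>Omega A N. seqdist z y < d \<longrightarrow> cmod (b y - b z) < e/2"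
    using c[rule_format, OF rz(2) half_gt_zero[OF e]] .
  then obtain d where d: "d > 0" "\<forall>y\<in>Omega A N. seqdist z y < d \<longrightarrow> cmod (b y - b z) < e/2"
    by blast
  obtain k :: nat where k: "exp (-(real k + 1)) < d"
  proof -
    obtain k :: nat where "1/d < real k" using reals_Archimedean2 by blast
    then have "1/d < 1 + real k" by simp
    also have "\<dots> \<le> exp (real k + 1) - 0" using exp_ge_add_one_self[of "real k + 1"] by simp
    finally have "1/d < exp (real k + 1)" by simp
    then have "inverse (exp (real k + 1)) < inverse (1/d)" using d(1) by (intro less_imp_inverse_less) auto
    then have "exp (-(real k + 1)) < d" by (simp only: exp_minus inverse_divide div_by_1)
    then show ?thesis using that by blast
  qed
  obtain n0 where n0: "\<forall>n\<ge>n0. \<forall>j<k. xs (r n) j = z j" using rz(3) unfolding eventually_sequentially by blast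
  define n where "n = max n0 k"
  have "k \<le> r n" using seq_suble[OF rz(1), of n] by (simp add: n_def)
  have ax: "\<forall>j<k. z j = xs (r n) j" using n0 by (simp add: n_def)
  have ay: "\<forall>j<k. z j = ys (r n) j" using ax xy \<open>k \<le> r n\<close> by (metis order_less_le_trans)
  have "cmod (b (xs (r n)) - b z) < e/2"
    using d(2) xy seqdist_agree[OF ax] k by (meson le_less_trans)
  moreover have "cmod (b (ys (r n)) - b z) < e/2"
    using d(2) xy seqdist_agree[OF ay] k by (meson le_less_trans)
  ultimately have "cmod (b (xs (r n)) - b (ys (r n))) < e"
    using norm_triangle_ineq4[of "b (xs (r n)) - b z" "b (ys (r n)) - b z"] by simp
  then show False using xy by blast
qed

definition pref :: "nat \<Rightarrow> (nat \<Rightarrow> nat) \<Rightarrow> nat list" where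
  "pref m x = map x [0..<m]"

lemma pref_eq: "pref m x = pref m y \<longleftrightarrow> (\<forall>j<m. x j = y j)"
  unfolding pref_def by (simp add: list_eq_iff_nth_eq)

definition rep :: "(nat \<Rightarrow> nat \<Rightarrow> bool) \<Rightarrow> nat \<Rightarrow> nat \<Rightarrow> nat list \<Rightarrow> (nat \<Rightarrow> nat)" where
  "rep A N m p = (SOME y. y \<in> Omega A N \<and> pref m y = p)"

lemma rep_props:
  assumes "x \<in> Omega A N"
  shows "rep A N m (pref m x) \<in> Omega A N \<and> (\<forall>j<m. rep A N m (pref m x) j = x j)"
proof -
  have "rep A N m (pref m x) \<in> Omega A N \<and> pref m (rep A N m (pref m x)) = pref m x"
    unfolding rep_def by (rule someI[of "\<lambda>y. y \<in> Omega A N \<and> pref m y = pref m x" x]) (simp add: assms)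
  then show ?thesis using pref_eq by blast
qed

lemma pref_fin: "finite (pref m ` Omega A N)"
proof (rule finite_subset)
  show "pref m ` Omega A N \<subseteq> {xs. set xs \<subseteq> {..<N} \<and> length xs \<le> m}"
    by (auto simp: pref_def Omega_def)
qed (rule finite_lists_length_le, simp)

lemma Cont_bdd:
  assumes b: "b \<in> Cont A N"
  shows "\<exists>K\<ge>0. \<forall>x\<in>Omega A N. cmod (b x) \<le> K"
proof -
  obtain m where m: "\<forall>x\<in>Omega A N. \<forall>y\<in>Omega A N. (\<forall>j<m. x j = y j) \<longrightarrow> cmod (b x - b y) < 1"
    using Cont_uc[OF b, of 1] by auto
  define K where "K = 1 + (\<Sum>p\<in>pref m ` Omega A N. cmod (b (rep A N m p)))"
  have "cmod (b x) \<le> K" if x: "x \<in> Omega A N" for x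
  proof -
    have r: "rep A N m (pref m x) \<in> Omega A N" "\<forall>j<m. rep A N m (pref m x) j = x j" using rep_props[OF x] by auto
    have "\<forall>j<m. x j = rep A N m (pref m x) j" using r(2) by simp
    then have "cmod (b x - b (rep A N m (pref m x))) < 1" using bspec[OF bspec[OF m x] r(1)] by (rule mp[rotated])
    then have "cmod (b x) \<le> 1 + cmod (b (rep A N m (pref m x)))" using norm_triangle_ineq2[of "b x" "b (rep A N m (pref m x))"] by simp
    also have "cmod (b (rep A N m (pref m x))) \<le> (\<Sum>p\<in>pref m ` Omega A N. cmod (b (rep A N m p)))"
      using pref_fin x by (intro member_le_sum) auto
    finally show ?thesis by (simp add: K_def)
  qed
  moreover have "0 \<le> K" by (simp add: K_def sum_nonneg)
  ultimately show ?thesis by blast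
qed

definition lc :: "(nat \<Rightarrow> nat \<Rightarrow> bool) \<Rightarrow> nat \<Rightarrow> nat \<Rightarrow> ((nat \<Rightarrow> nat) \<Rightarrow> complex) \<Rightarrow> bool" where
  "lc A N m b \<longleftrightarrow> (\<forall>x\<in>Omega A N. \<forall>y\<in>Omega A N. (\<forall>j<m. x j = y j) \<longrightarrow> b x = b y)"

definition LC :: "(nat \<Rightarrow> nat \<Rightarrow> bool) \<Rightarrow> nat \<Rightarrow> ((nat \<Rightarrow> nat) \<Rightarrow> complex) set" where
  "LC A N = {b. \<exists>m. lc A N m b}"

lemma lc_mono: "lc A N m b \<Longrightarrow> m \<le> m' \<Longrightarrow> lc A N m' b"
  unfolding lc_def
proof (intro ballI impI)
  fix x y assume h: "\<forall>x\<in>Omega A N. \<forall>y\<in>Omega A N. (\<forall>j<m. x j = y j) \<longrightarrow> b x = b y" "m \<le> m'"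
    "x \<in> Omega A N" "y \<in> Omega A N" "\<forall>j<m'. x j = y j"
  have "\<forall>j<m. x j = y j" using h(2,5) by simp
  then show "b x = b y" using bspec[OF bspec[OF h(1) h(3)] h(4)] by (rule mp[rotated])
qed

lemma LC_Cont: "LC A N \<subseteq> Cont A N"
proof
  fix b assume "b \<in> LC A N"
  then obtain m where m: "lc A N m b" by (auto simp: LC_def)
  show "b \<in> Cont A N" unfolding Cont_def
  proof (intro CollectI ballI allI impI)
    fix x e assume x: "x \<in> Omega A N" and e: "(0::real) < e"
    show "\<exists>d>0. \<forall>y\<in>Omega A N. seqdist x y < d \<longrightarrow> cmod (b y - b x) < e"
    proof (intro exI[of _ "exp (- real m)"] conjI ballI impI)
      fix y assume "y \<in> Omega A N" "seqdist x y < exp (- real m)"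
      then have "\<forall>j<m. x j = y j" using dist_small[of x y m] by simp
      then have "b x = b y" using bspec[OF bspec[OF m[unfolded lc_def] x] \<open>y \<in> Omega A N\<close>] by (rule mp[rotated])
      then show "cmod (b y - b x) < e" using e by simp
    qed simp
  qed
qed

lemma LC_subalg: "subalgebra (LC A N)"
  unfolding subalgebra_def
proof (intro conjI ballI allI)
  fix b c assume "b \<in> LC A N" "c \<in> LC A N"
  then obtain m m' where "lc A N m b" "lc A N m' c" by (auto simp: LC_def)
  then have bm: "lc A N (max m m') b" and cm: "lc A N (max m m') c"
    using lc_mono[of A N m b "max m m'"] lc_mono[of A N m' c "max m m'"] by simp_all
  have eqs: "b x = b y \<and> c x = c y" if "x \<in> Omega A N" "y \<in> Omega A N" "\<forall>j<max m m'. x j = y j" for x y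
    using bm cm that unfolding lc_def by blast
  have l1: "lc A N (max m m') (\<lambda>x. b x + c x)"
    unfolding lc_def
  proof (intro ballI impI)
    fix x y assume "x \<in> Omega A N" "y \<in> Omega A N" "\<forall>j<max m m'. x j = y j"
    from eqs[OF this] show "b x + c x = b y + c y" by simp
  qed
  have l2: "lc A N (max m m') (\<lambda>x. b x * c x)"
    unfolding lc_def
  proof (intro ballI impI)
    fix x y assume "x \<in> Omega A N" "y \<in> Omega A N" "\<forall>j<max m m'. x j = y j"
    from eqs[OF this] show "b x * c x = b y * c y" by simp
  qed
  show "(\<lambda>x. b x + c x) \<in> LC A N" unfolding LC_def mem_Collect_eq by (rule exI, rule l1)
  show "(\<lambda>x. b x * c x) \<in> LC A N" unfolding LC_def mem_Collect_eq by (rule exI, rule l2)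
next
  fix b :: "(nat \<Rightarrow> nat) \<Rightarrow> complex" and a assume "b \<in> LC A N"
  then obtain m where m: "lc A N m b" by (auto simp: LC_def)
  have bxy: "b x = b y" if "x \<in> Omega A N" "y \<in> Omega A N" "\<forall>j<m. x j = y j" for x y
    using m that unfolding lc_def by blast
  have "lc A N m (\<lambda>x. a * b x)" unfolding lc_def
  proof (intro ballI impI)
    fix x y assume "x \<in> Omega A N" "y \<in> Omega A N" "\<forall>j<m. x j = y j"
    from bxy[OF this] show "a * b x = a * b y" by simp
  qed
  then show "(\<lambda>x. a * b x) \<in> LC A N" unfolding LC_def mem_Collect_eq by (rule exI)
qed

lemma LC_dense: "fdense_in (LC A N) (Cont A N) (Omega A N)"
  unfolding fdense_in_def
proof (intro ballI allI impI)
  fix b e assume b: "b \<in> Cont A N" and e: "(0::real) < e"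
  obtain m where m: "\<forall>x\<in>Omega A N. \<forall>y\<in>Omega A N. (\<forall>j<m. x j = y j) \<longrightarrow> cmod (b x - b y) < e"
    using Cont_uc[OF b e] by auto
  define g where "g x = b (rep A N m (pref m x))" for x
  have "lc A N m g" unfolding lc_def g_def
  proof (intro ballI impI)
    fix x y assume "x \<in> Omega A N" "y \<in> Omega A N" "\<forall>j<m. x j = y j"
    then have "pref m x = pref m y" using pref_eq by blast
    then show "b (rep A N m (pref m x)) = b (rep A N m (pref m y))" by simp
  qed
  then have "g \<in> LC A N" unfolding LC_def mem_Collect_eq by (rule exI)
  moreover have "cmod (b x - g x) < e" if x: "x \<in> Omega A N" for x
  proof -
    have "\<forall>j<m. x j = rep A N m (pref m x) j" using rep_props[OF x, of m] by simp
    moreover have "rep A N m (pref m x) \<in> Omega A N" using rep_props[OF x, of m] by simp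
    ultimately show ?thesis unfolding g_def using bspec[OF bspec[OF m x]] by blast
  qed
  ultimately show "\<exists>g\<in>LC A N. \<forall>x\<in>Omega A N. cmod (b x - g x) < e" by blast
qed

lemma cyl_diam: "sdiam (cyl A N \<mu>) \<le> exp (-(real (length \<mu>) + 1))"
proof (cases "cyl A N \<mu> = {}")
  case True then show ?thesis by (simp add: sdiam_def)
next
  case False
  have "Sup {seqdist x y | x y. x \<in> cyl A N \<mu> \<and> y \<in> cyl A N \<mu>} \<le> exp (-(real (length \<mu>) + 1))"
  proof (rule cSup_least)
    show "{seqdist x y | x y. x \<in> cyl A N \<mu> \<and> y \<in> cyl A N \<mu>} \<noteq> {}" using False by blast
    fix d assume "d \<in> {seqdist x y | x y. x \<in> cyl A N \<mu> \<and> y \<in> cyl A N \<mu>}"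
    then obtain x y where "x \<in> cyl A N \<mu>" "y \<in> cyl A N \<mu>" "d = seqdist x y" by blast
    then show "d \<le> exp (-(real (length \<mu>) + 1))" using seqdist_agree[of "length \<mu>" x y] by (auto simp: cyl_def)
  qed
  then show ?thesis using False by (simp add: sdiam_def)
qed

lemma comp_agree:
  assumes comp: "comparable A N tp tm"
  shows "\<exists>L. \<forall>\<mu>\<in>words A N. L + m \<le> length \<mu> \<longrightarrow> (\<forall>j<m. tp \<mu> j = tm \<mu> j)"
proof -
  obtain C where C: "C > 0" "\<forall>\<mu>\<in>words A N. seqdist (tp \<mu>) (tm \<mu>) \<le> C * sdiam (cyl A N \<mu>)"
    using comp unfolding comparable_def by blast
  obtain L :: nat where L: "C \<le> real L" using real_arch_simple by blast
  have "C < exp (real L)" using L exp_ge_add_one_self[of "real L"] by linarith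
  have "\<forall>j<m. tp \<mu> j = tm \<mu> j" if \<mu>: "\<mu> \<in> words A N" "L + m \<le> length \<mu>" for \<mu>
  proof -
    have "seqdist (tp \<mu>) (tm \<mu>) \<le> C * exp (-(real (length \<mu>) + 1))"
      using C \<mu> cyl_diam[of A N \<mu>] by (meson mult_left_mono less_imp_le order_trans)
    also have "\<dots> < exp (real L) * exp (-(real (length \<mu>) + 1))"
      using \<open>C < exp (real L)\<close> by simp
    also have "\<dots> = exp (real L - real (length \<mu>) - 1)" by (simp add: exp_add[symmetric])
    also have "\<dots> \<le> exp (- real m)" using \<mu>(2) by simp
    finally show ?thesis using dist_small by blast
  qed
  then show ?thesis by blast
qed

lemma LC_agree:
  assumes comp: "comparable A N tp tm" and b: "b \<in> LC A N"
    and tp: "tp ` words A N \<subseteq> Omega A N" and tm: "tm ` words A N \<subseteq> Omega A N"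
  shows "\<exists>L. \<forall>\<mu>\<in>words A N. L \<le> length \<mu> \<longrightarrow> b (tp \<mu>) = b (tm \<mu>)"
proof -
  obtain m where m: "lc A N m b" using b by (auto simp: LC_def)
  obtain L where L: "\<forall>\<mu>\<in>words A N. L + m \<le> length \<mu> \<longrightarrow> (\<forall>j<m. tp \<mu> j = tm \<mu> j)"
    using comp_agree[OF comp] by blast
  show ?thesis using L m tp tm unfolding lc_def by (intro exI[of _ "L + m"]) blast
qed

lemma words_fin: "finite {\<mu>\<in>words A N. length \<mu> \<le> n}"
  by (rule finite_subset[OF _ finite_lists_length_le[of "{..<N}" n]])
     (auto simp: words_def admissible_def)

lemma sum_pow_le: "(\<Sum>i\<le>n. (N::nat)^i) \<le> (N+1)^n"
proof (induction n)
  case 0 then show ?case by simp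
next
  case (Suc n)
  have "(\<Sum>i\<le>Suc n. N^i) = (\<Sum>i\<le>n. N^i) + N * N^n" by simp
  also have "\<dots> \<le> (N+1)^n + N * (N+1)^n"
    using Suc by (intro add_mono mult_left_mono power_mono) auto
  also have "\<dots> = (N+1)^Suc n" by (simp add: algebra_simps)
  finally show ?case .
qed

lemma words_card: "card ({\<mu>\<in>words A N. length \<mu> \<le> n} \<times> (UNIV::bool set)) \<le> 2 * (N+1)^n"
proof -
  have "card {\<mu>\<in>words A N. length \<mu> \<le> n} \<le> card {xs. set xs \<subseteq> {..<N} \<and> length xs \<le> n}"
    by (rule card_mono[OF finite_lists_length_le]) (auto simp: words_def admissible_def)
  also have "\<dots> = (\<Sum>i\<le>n. N^i)" by (simp add: card_lists_length_le)
  also have "\<dots> \<le> (N+1)^n" by (rule sum_pow_le)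
  finally show ?thesis by (simp add: card_cartesian_product)
qed

definition Dmax :: "(nat \<Rightarrow> nat \<Rightarrow> bool) \<Rightarrow> nat \<Rightarrow> (nat list \<Rightarrow> real) \<Rightarrow> (nat list \<times> bool \<Rightarrow> complex) set" where
  "Dmax A N w = {\<phi> \<in> l2 (BP_index A N). D_fin w \<phi> \<in> l2 (BP_index A N)}"

lemma D_fin_blk: "D_fin w \<phi> = blk (\<lambda>_. 0) (\<lambda>x. complex_of_real (w (fst x))) \<phi>"
  by (auto simp: D_fin_def blk_def flp_def fun_eq_iff)

lemma D_fin_apply: "D_fin w \<phi> x = complex_of_real (w (fst x)) * \<phi> (flp x)"
  by (simp add: D_fin_blk blk_def)

lemma l2_conv_pt:
  assumes "\<forall>n. f n \<in> l2 I" "\<phi> \<in> l2 I" "l2_conv f \<phi>"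
  shows "(\<lambda>n. f n x) \<longlonglongrightarrow> \<phi> x"
proof -
  have "cmod (f n x - \<phi> x) \<le> l2_norm (\<lambda>y. f n y - \<phi> y)" for n
  proof -
    have "(\<lambda>y. f n y - \<phi> y) \<in> l2 I" using assms(1,2) by (intro l2_sub) auto
    then have "sqs (\<lambda>y. f n y - \<phi> y) summable_on UNIV" by (simp add: l2_iff)
    from pt_le[OF this] show ?thesis .
  qed
  then have a: "\<forall>n. norm (f n x - \<phi> x) \<le> l2_norm (\<lambda>y. f n y - \<phi> y)" by simp
  have b: "(\<lambda>n. l2_norm (\<lambda>y. f n y - \<phi> y)) \<longlonglongrightarrow> 0" using assms(3) by (simp add: l2_conv_def)
  have "(\<lambda>n. f n x - \<phi> x) \<longlonglongrightarrow> 0"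
    by (rule Lim_null_comparison[OF always_eventually[OF a] b])
  then show ?thesis by (simp add: LIM_zero_iff)
qed

definition glen :: "nat list \<times> bool \<Rightarrow> nat" where "glen x = length (fst x)"

lemma trunc_fin:
  assumes "\<phi> \<in> l2 (BP_index A N)"
  shows "trunc glen n \<phi> \<in> fin_supp A N"
proof -
  have sub: "{x. trunc glen n \<phi> x \<noteq> 0} \<subseteq> {\<mu>\<in>words A N. length \<mu> \<le> n} \<times> UNIV"
    using assms by (auto simp: trunc_def glen_def l2_iff BP_index_def split: if_splits)
  then have fin: "finite {x. trunc glen n \<phi> x \<noteq> 0}"
    by (rule finite_subset) (simp add: words_fin)
  have "trunc glen n \<phi> \<in> l2 (BP_index A N)"
    using assms l2_finite_supp[OF fin] by (auto simp: l2_iff trunc_def)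
  then show ?thesis using fin by (simp add: fin_supp_def)
qed

lemma D_fin_trunc: "D_fin w (trunc glen n \<phi>) = trunc glen n (D_fin w \<phi>)"
  by (simp add: D_fin_apply trunc_def glen_def fun_eq_iff)

lemma D_fin_H:
  assumes "\<phi> \<in> fin_supp A N"
  shows "D_fin w \<phi> \<in> l2 (BP_index A N)"
proof -
  have \<phi>: "\<phi> \<in> l2 (BP_index A N)" "finite {i. \<phi> i \<noteq> 0}" using assms by (auto simp: fin_supp_def)
  have "{x. D_fin w \<phi> x \<noteq> 0} \<subseteq> flp ` {i. \<phi> i \<noteq> 0}"
  proof
    fix x assume "x \<in> {x. D_fin w \<phi> x \<noteq> 0}"
    then have "\<phi> (flp x) \<noteq> 0" by (auto simp: D_fin_apply)
    then show "x \<in> flp ` {i. \<phi> i \<noteq> 0}" by (intro image_eqI[of x flp "flp x"]) auto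
  qed
  then have fin: "finite {x. D_fin w \<phi> x \<noteq> 0}" using \<phi>(2) finite_subset by blast
  have "x \<notin> BP_index A N \<Longrightarrow> D_fin w \<phi> x = 0" for x
    using \<phi>(1) by (cases x) (auto simp: D_fin_apply l2_iff BP_index_def flp_def)
  then show ?thesis using l2_finite_supp[OF fin] by (simp add: l2_iff)
qed

lemma fin_supp_H: "fin_supp A N \<subseteq> l2 (BP_index A N)" by (auto simp: fin_supp_def)

lemma dom_char:
  assumes cl: "\<phi> \<in> D_dom A N w"
  shows "\<phi> \<in> Dmax A N w"
proof -
  obtain f \<psi> where f: "\<forall>n. f n \<in> fin_supp A N" "l2_conv f \<phi>" "\<psi> \<in> l2 (BP_index A N)"
     "l2_conv (\<lambda>n. D_fin w (f n)) \<psi>" and \<phi>: "\<phi> \<in> l2 (BP_index A N)"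
    using cl unfolding D_dom_def closure_dom_def by blast
  have fH: "\<forall>n. f n \<in> l2 (BP_index A N)" using f(1) fin_supp_H by blast
  have "\<psi> x = D_fin w \<phi> x" for x
  proof -
    have "(\<lambda>n. D_fin w (f n) x) \<longlonglongrightarrow> \<psi> x"
      using l2_conv_pt[OF _ f(3,4)] D_fin_H f(1) by blast
    moreover have "(\<lambda>n. D_fin w (f n) x) \<longlonglongrightarrow> D_fin w \<phi> x"
      unfolding D_fin_apply using l2_conv_pt[OF fH \<phi> f(2)] by (intro tendsto_intros)
    ultimately show ?thesis by (rule LIMSEQ_unique)
  qed
  then have "D_fin w \<phi> = \<psi>" by auto
  then show ?thesis using \<phi> f(3) by (simp add: Dmax_def)
qed

lemma dom_char2:
  assumes "\<phi> \<in> Dmax A N w"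
  shows "\<phi> \<in> D_dom A N w \<and> D_op A N w \<phi> = D_fin w \<phi>"
proof -
  have \<phi>: "\<phi> \<in> l2 (BP_index A N)" "D_fin w \<phi> \<in> l2 (BP_index A N)" using assms by (auto simp: Dmax_def)
  let ?f = "\<lambda>n. trunc glen n \<phi>"
  have ex: "(\<forall>n. ?f n \<in> fin_supp A N) \<and> l2_conv ?f \<phi> \<and> D_fin w \<phi> \<in> l2 (BP_index A N) \<and>
      l2_conv (\<lambda>n. D_fin w (?f n)) (D_fin w \<phi>)"
    using trunc_fin[OF \<phi>(1)] trunc_conv \<phi> unfolding D_fin_trunc by (auto simp: l2_iff)
  then have "\<exists>f \<psi>. (\<forall>n. f n \<in> fin_supp A N) \<and> l2_conv f \<phi> \<and> \<psi> \<in> l2 (BP_index A N) \<and> l2_conv (\<lambda>n. D_fin w (f n)) \<psi>"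
    by (intro exI[of _ ?f] exI[of _ "D_fin w \<phi>"])
  then have "\<phi> \<in> D_dom A N w" unfolding D_dom_def closure_dom_def using \<phi>(1) by simp
  moreover have "D_op A N w \<phi> = D_fin w \<phi>"
    unfolding D_op_def closure_op_def
  proof (rule the_equality)
    show "\<exists>f. (\<forall>n. f n \<in> fin_supp A N) \<and> l2_conv f \<phi> \<and> D_fin w \<phi> \<in> l2 (BP_index A N) \<and> l2_conv (\<lambda>n. D_fin w (f n)) (D_fin w \<phi>)"
      by (rule exI[of _ ?f], rule ex)
    fix \<psi> assume "\<exists>f. (\<forall>n. f n \<in> fin_supp A N) \<and> l2_conv f \<phi> \<and> \<psi> \<in> l2 (BP_index A N) \<and> l2_conv (\<lambda>n. D_fin w (f n)) \<psi>"
    then obtain f where f: "\<forall>n. f n \<in> fin_supp A N" "l2_conv f \<phi>" "\<psi> \<in> l2 (BP_index A N)"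
      "l2_conv (\<lambda>n. D_fin w (f n)) \<psi>" by blast
    have fH: "\<forall>n. f n \<in> l2 (BP_index A N)" using f(1) fin_supp_H by blast
    have "\<psi> x = D_fin w \<phi> x" for x
    proof -
      have "(\<lambda>n. D_fin w (f n) x) \<longlonglongrightarrow> \<psi> x"
        using l2_conv_pt[OF _ f(3,4)] D_fin_H f(1) by blast
      moreover have "(\<lambda>n. D_fin w (f n) x) \<longlonglongrightarrow> D_fin w \<phi> x"
        unfolding D_fin_apply using l2_conv_pt[OF fH \<phi>(1) f(2)] by (intro tendsto_intros)
      ultimately show ?thesis by (rule LIMSEQ_unique)
    qed
    then show "\<psi> = D_fin w \<phi>" by auto
  qed
  ultimately show ?thesis by blast
qed

lemma D_dom_eq: "D_dom A N w = Dmax A N w"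
  using dom_char dom_char2 by blast

lemma D_op_eq: "\<phi> \<in> D_dom A N w \<Longrightarrow> D_op A N w \<phi> = D_fin w \<phi>"
  using dom_char dom_char2 by blast

lemma l2_out: "\<phi> \<in> l2 I \<Longrightarrow> x \<notin> I \<Longrightarrow> \<phi> x = 0"
  by (simp add: l2_def)

lemma infsum_single:
  assumes "\<And>y. y \<noteq> p \<Longrightarrow> f y = (0::complex)"
  shows "infsum f UNIV = f p"
proof -
  have "infsum f UNIV = infsum f {p}"
    by (rule infsum_cong_neutral) (use assms in auto)
  then show ?thesis by simp
qed

definition delta :: "'i \<Rightarrow> 'i \<Rightarrow> complex" where "delta p = (\<lambda>x. if x = p then 1 else 0)"

lemma delta_fin:
  assumes "p \<in> BP_index A N"
  shows "delta p \<in> fin_supp A N"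
proof -
  have fin: "finite {x. delta p x \<noteq> 0}" by (simp add: delta_def)
  then have "delta p \<in> l2 (BP_index A N)"
    using assms l2_finite_supp[OF fin] by (auto simp: l2_iff delta_def)
  then show ?thesis using fin by (simp add: fin_supp_def)
qed

lemma delta_dom: "p \<in> BP_index A N \<Longrightarrow> delta p \<in> D_dom A N w"
  using delta_fin D_fin_H fin_supp_H unfolding D_dom_eq Dmax_def by blast

lemma bij_flp: "bij_betw flp UNIV UNIV"
  by (rule bij_betwI[of _ _ _ flp]) auto

lemma D_fin_lin: "D_fin w (\<lambda>x. a * \<phi> x + \<psi> x) = (\<lambda>x. a * D_fin w \<phi> x + D_fin w \<psi> x)"
  by (simp add: D_fin_apply fun_eq_iff algebra_simps)

lemma BP_flp: "x \<notin> BP_index A N \<Longrightarrow> flp x \<notin> BP_index A N"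
  by (cases x) (simp add: BP_index_def flp_def)

lemma D_self_adjoint:
  "self_adjoint (l2 (BP_index A N)) (D_dom A N w) (D_op A N w)"
  unfolding self_adjoint_def
proof (intro conjI ballI allI)
  let ?H = "l2 (BP_index A N)"
  show "D_dom A N w \<subseteq> ?H" by (auto simp: D_dom_eq Dmax_def)
  show "D_op A N w \<phi> \<in> ?H" if "\<phi> \<in> D_dom A N w" for \<phi>
    using that D_op_eq[OF that] by (simp add: D_dom_eq Dmax_def)
  fix \<phi> \<psi> a assume \<phi>: "\<phi> \<in> D_dom A N w" and \<psi>: "\<psi> \<in> D_dom A N w"
  have l: "(\<lambda>x. a * \<phi> x + \<psi> x) \<in> Dmax A N w"
    using \<phi> \<psi> unfolding D_dom_eq Dmax_def by (auto simp: D_fin_lin intro: l2_lin)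
  then show "(\<lambda>x. a * \<phi> x + \<psi> x) \<in> D_dom A N w" by (simp add: D_dom_eq)
  show "D_op A N w (\<lambda>x. a * \<phi> x + \<psi> x) = (\<lambda>x. a * D_op A N w \<phi> x + D_op A N w \<psi> x)"
    using D_op_eq[OF \<phi>] D_op_eq[OF \<psi>] D_op_eq l D_fin_lin by (simp add: D_dom_eq)
next
  let ?H = "l2 (BP_index A N)"
  fix \<phi> assume \<phi>: "\<phi> \<in> ?H"
  have "trunc glen n \<phi> \<in> D_dom A N w" for n
    using trunc_fin[OF \<phi>] D_fin_H fin_supp_H unfolding D_dom_eq Dmax_def by blast
  moreover have "l2_conv (\<lambda>n. trunc glen n \<phi>) \<phi>" using \<phi> by (intro trunc_conv) (simp add: l2_iff)
  ultimately show "\<exists>f. (\<forall>n. f n \<in> D_dom A N w) \<and> l2_conv f \<phi>"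
    by (intro exI[of _ "\<lambda>n. trunc glen n \<phi>"] conjI allI) auto
next
  let ?H = "l2 (BP_index A N)"
  have sym: "l2_inner (D_op A N w \<phi>) \<eta> = l2_inner \<phi> (D_op A N w \<eta>)"
    if \<phi>: "\<phi> \<in> D_dom A N w" and \<eta>: "\<eta> \<in> D_dom A N w" for \<phi> \<eta>
  proof -
    have "l2_inner (D_op A N w \<phi>) \<eta> = infsum (\<lambda>x. complex_of_real (w (fst x)) * \<phi> (flp x) * cnj (\<eta> x)) UNIV"
      by (simp add: l2_inner_def D_op_eq[OF \<phi>] D_fin_apply)
    also have "\<dots> = infsum (\<lambda>x. complex_of_real (w (fst (flp x))) * \<phi> (flp (flp x)) * cnj (\<eta> (flp x))) UNIV"
      by (rule infsum_reindex_bij_betw[OF bij_flp, symmetric])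
    also have "\<dots> = l2_inner \<phi> (D_op A N w \<eta>)"
      by (simp add: l2_inner_def D_op_eq[OF \<eta>] D_fin_apply algebra_simps)
    finally show ?thesis .
  qed
  fix \<eta> assume \<eta>: "\<eta> \<in> ?H"
  show "\<eta> \<in> D_dom A N w \<longleftrightarrow> (\<exists>\<zeta>\<in>?H. \<forall>\<phi>\<in>D_dom A N w. l2_inner (D_op A N w \<phi>) \<eta> = l2_inner \<phi> \<zeta>)"
  proof
    assume "\<eta> \<in> D_dom A N w"
    then show "\<exists>\<zeta>\<in>?H. \<forall>\<phi>\<in>D_dom A N w. l2_inner (D_op A N w \<phi>) \<eta> = l2_inner \<phi> \<zeta>"
      using sym D_op_eq by (intro bexI[of _ "D_op A N w \<eta>"]) (auto simp: D_dom_eq Dmax_def)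
  next
    assume "\<exists>\<zeta>\<in>?H. \<forall>\<phi>\<in>D_dom A N w. l2_inner (D_op A N w \<phi>) \<eta> = l2_inner \<phi> \<zeta>"
    then obtain \<zeta> where \<zeta>: "\<zeta> \<in> ?H" "\<forall>\<phi>\<in>D_dom A N w. l2_inner (D_op A N w \<phi>) \<eta> = l2_inner \<phi> \<zeta>" by blast
    have "\<zeta> p = D_fin w \<eta> p" for p
    proof (cases "p \<in> BP_index A N")
      case True
      have dp: "delta p \<in> D_dom A N w" by (rule delta_dom[OF True])
      have "l2_inner (D_op A N w (delta p)) \<eta> = infsum (\<lambda>y. complex_of_real (w (fst y)) * delta p (flp y) * cnj (\<eta> y)) UNIV"
        by (simp add: l2_inner_def D_op_eq[OF dp] D_fin_apply)
      also have "\<dots> = complex_of_real (w (fst (flp p))) * delta p (flp (flp p)) * cnj (\<eta> (flp p))"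
      proof (rule infsum_single)
        fix y assume "y \<noteq> flp p"
        then have "flp y \<noteq> p" by (metis flp_flp)
        then show "complex_of_real (w (fst y)) * delta p (flp y) * cnj (\<eta> y) = 0" by (simp add: delta_def)
      qed
      also have "\<dots> = complex_of_real (w (fst p)) * cnj (\<eta> (flp p))" by (simp add: delta_def)
      finally have 1: "l2_inner (D_op A N w (delta p)) \<eta> = complex_of_real (w (fst p)) * cnj (\<eta> (flp p))" .
      have "l2_inner (delta p) \<zeta> = infsum (\<lambda>y. delta p y * cnj (\<zeta> y)) UNIV" by (simp add: l2_inner_def)
      also have "\<dots> = delta p p * cnj (\<zeta> p)" by (rule infsum_single) (simp add: delta_def)
      finally have 2: "l2_inner (delta p) \<zeta> = cnj (\<zeta> p)" by (simp add: delta_def)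
      have "cnj (\<zeta> p) = complex_of_real (w (fst p)) * cnj (\<eta> (flp p))" using 1 2 \<zeta>(2) dp by metis
      then have "\<zeta> p = cnj (complex_of_real (w (fst p)) * cnj (\<eta> (flp p)))" by (metis complex_cnj_cnj)
      then show ?thesis by (simp add: D_fin_apply)
    next
      case False
      then have "\<zeta> p = 0" "\<eta> (flp p) = 0" using l2_out[OF \<zeta>(1)] l2_out[OF \<eta>] BP_flp[OF False] by auto
      then show ?thesis by (simp add: D_fin_apply)
    qed
    then have "D_fin w \<eta> = \<zeta>" by auto
    then show "\<eta> \<in> D_dom A N w" using \<eta> \<zeta>(1) by (simp add: D_dom_eq Dmax_def)
  qed
next
  fix \<eta> \<phi> assume "\<eta> \<in> D_dom A N w" "\<phi> \<in> D_dom A N w"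
  then show "l2_inner (D_op A N w \<phi>) \<eta> = l2_inner \<phi> (D_op A N w \<eta>)"
  proof -
    assume \<eta>: "\<eta> \<in> D_dom A N w" and \<phi>: "\<phi> \<in> D_dom A N w"
    have "l2_inner (D_op A N w \<phi>) \<eta> = infsum (\<lambda>x. complex_of_real (w (fst x)) * \<phi> (flp x) * cnj (\<eta> x)) UNIV"
      by (simp add: l2_inner_def D_op_eq[OF \<phi>] D_fin_apply)
    also have "\<dots> = infsum (\<lambda>x. complex_of_real (w (fst (flp x))) * \<phi> (flp (flp x)) * cnj (\<eta> (flp x))) UNIV"
      by (rule infsum_reindex_bij_betw[OF bij_flp, symmetric])
    also have "\<dots> = l2_inner \<phi> (D_op A N w \<eta>)"
      by (simp add: l2_inner_def D_op_eq[OF \<eta>] D_fin_apply algebra_simps)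
    finally show ?thesis .
  qed
qed

definition Rc :: "(nat list \<Rightarrow> real) \<Rightarrow> complex \<Rightarrow> (nat list \<times> bool) hop" where
  "Rc w l = blk (\<lambda>x. - l / (1 + of_real (w (fst x)) * of_real (w (fst x))))
                (\<lambda>x. of_real (w (fst x)) / (1 + of_real (w (fst x)) * of_real (w (fst x))))"

lemma den_nz: "1 + complex_of_real r * complex_of_real r \<noteq> 0"
proof -
  have "1 + complex_of_real r * complex_of_real r = complex_of_real (1 + r * r)" by simp
  moreover have "1 + r * r > 0" by (simp add: add_pos_nonneg)
  ultimately show ?thesis by (metis of_real_eq_0_iff order_less_irrefl)
qed

lemma alg1:
  assumes "l * l = -1" "1 + W * W \<noteq> (0::complex)"
  shows "W * ((-l*b + W*a)/(1+W*W)) + l * ((-l*a + W*b)/(1+W*W)) = a"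
proof -
  have "W * (-l*b + W*a) + l*(-l*a + W*b) = (1+W*W)*a" using assms(1) by algebra
  moreover have "W * ((-l*b + W*a)/(1+W*W)) + l * ((-l*a + W*b)/(1+W*W)) = (W * (-l*b + W*a) + l*(-l*a + W*b)) / (1+W*W)"
    by (simp only: times_divide_eq_right add_divide_distrib[symmetric])
  ultimately show ?thesis using assms(2) by simp
qed

lemma alg2:
  assumes "l * l = -1" "1 + W * W \<noteq> (0::complex)"
  shows "(-l * (W * b + l * a) + W * (W * a + l * b)) / (1 + W*W) = a"
proof -
  have "-l * (W * b + l * a) + W * (W * a + l * b) = (1+W*W)*a" using assms(1) by algebra
  then show ?thesis using assms(2) by simp
qed

lemma Rc_apply: "Rc w l \<phi> x = (- l * \<phi> x + of_real (w (fst x)) * \<phi> (flp x)) / (1 + of_real (w (fst x)) * of_real (w (fst x)))"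
  by (simp add: Rc_def blk_def add_divide_distrib diff_divide_distrib)

lemma Rc_eqn:
  assumes "l * l = -1"
  shows "(\<lambda>x. D_fin w (Rc w l \<phi>) x + l * Rc w l \<phi> x) = \<phi>"
proof
  fix x :: "nat list \<times> bool"
  let ?W = "complex_of_real (w (fst x))"
  have "D_fin w (Rc w l \<phi>) x + l * Rc w l \<phi> x
      = ?W * ((-l * \<phi> (flp x) + ?W * \<phi> x) / (1 + ?W * ?W)) + l * ((-l * \<phi> x + ?W * \<phi> (flp x)) / (1 + ?W * ?W))"
    by (simp add: D_fin_apply Rc_apply)
  also have "\<dots> = \<phi> x" by (rule alg1[OF assms den_nz])
  finally show "D_fin w (Rc w l \<phi>) x + l * Rc w l \<phi> x = \<phi> x" .
qed

lemma Rc_unique: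
  assumes "l * l = -1" "(\<lambda>x. D_fin w \<psi> x + l * \<psi> x) = \<phi>"
  shows "\<psi> = Rc w l \<phi>"
proof
  fix x :: "nat list \<times> bool"
  let ?W = "complex_of_real (w (fst x))"
  have e1: "\<phi> x = ?W * \<psi> (flp x) + l * \<psi> x" using fun_cong[OF assms(2), of x] by (simp add: D_fin_apply)
  have e2: "\<phi> (flp x) = ?W * \<psi> x + l * \<psi> (flp x)" using fun_cong[OF assms(2), of "flp x"] by (simp add: D_fin_apply)
  have "Rc w l \<phi> x = (-l * (?W * \<psi> (flp x) + l * \<psi> x) + ?W * (?W * \<psi> x + l * \<psi> (flp x))) / (1 + ?W * ?W)"
    by (simp add: Rc_apply e1 e2)
  also have "\<dots> = \<psi> x" by (rule alg2[OF assms(1) den_nz])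
  finally show "\<psi> x = Rc w l \<phi> x" by simp
qed

lemma cm_den: "cmod (1 + complex_of_real r * complex_of_real r) = 1 + r * r"
proof -
  have e: "1 + complex_of_real r * complex_of_real r = complex_of_real (1 + r * r)" by simp
  have "0 \<le> 1 + r * r" by (simp add: add_nonneg_nonneg)
  then show ?thesis unfolding e norm_of_real by simp
qed

lemma cm_div: "cmod (complex_of_real r / (1 + complex_of_real r * complex_of_real r)) = \<bar>r\<bar> / (1 + r*r)"
  by (simp only: norm_divide cm_den norm_of_real)

lemma cm_div2: "cmod l = 1 \<Longrightarrow> cmod (- l / (1 + complex_of_real r * complex_of_real r)) = 1 / (1 + r*r)"
  by (simp only: norm_divide cm_den norm_minus_cancel)

lemma cm_div2': "cmod l = 1 \<Longrightarrow> cmod (l / (1 + complex_of_real r * complex_of_real r)) = 1 / (1 + r*r)"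
  by (simp only: norm_divide cm_den)

lemma num1: "\<bar>r\<bar> / (1 + r*r) \<le> (1::real)"
proof -
  have "\<bar>r\<bar> \<le> 1 + r*r"
  proof (cases "\<bar>r\<bar> \<le> 1")
    case True then show ?thesis by (simp add: add_increasing2)
  next
    case False
    then have "\<bar>r\<bar> * 1 \<le> \<bar>r\<bar> * \<bar>r\<bar>" by (intro mult_left_mono) auto
    then have "\<bar>r\<bar> \<le> r * r" by (simp add: abs_mult_self_eq)
    then show ?thesis by simp
  qed
  then show ?thesis by (simp add: add_pos_nonneg)
qed

lemma num2: "1 / (1 + r*r) \<le> (1::real)"
proof -
  have "0 \<le> r * r" by simp
  then have "1 \<le> 1 + r*r" "0 < 1 + r*r" by linarith+
  then show ?thesis by (simp add: divide_le_eq)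
qed

lemma num3: "0 \<le> r \<Longrightarrow> \<bar>r\<bar> / (1 + r*r) \<le> 2 / (1 + (r::real))"
proof -
  assume r: "0 \<le> r"
  have "r * (1 + r) \<le> 2 * (1 + r*r)"
  proof -
    have "0 \<le> (r - 1/2) * (r - 1/2)" by simp
    then show ?thesis by (simp add: algebra_simps)
  qed
  then show ?thesis using r by (simp add: field_simps add_pos_nonneg)
qed

lemma num4: "0 \<le> r \<Longrightarrow> 1 / (1 + r*r) \<le> 2 / (1 + (r::real))"
proof -
  assume r: "0 \<le> r"
  have "1 + r \<le> 2 * (1 + r*r)"
  proof -
    have "0 \<le> (r - 1/4) * (r - 1/4)" by simp
    then show ?thesis by (simp add: algebra_simps)
  qed
  then show ?thesis using r by (simp add: field_simps add_pos_nonneg)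
qed

lemma alg3: "c \<noteq> 0 \<Longrightarrow> W * ((-l*b + W*a)/c) = W*W/c * a + (-l*W/c) * (b::complex)"
  by (simp add: field_simps)

lemma D_fin_Rc_blk: "D_fin w (Rc w l \<phi>) = blk (\<lambda>x. of_real (w (fst x)) * of_real (w (fst x)) / (1 + of_real (w (fst x)) * of_real (w (fst x))))
   (\<lambda>x. - l * of_real (w (fst x)) / (1 + of_real (w (fst x)) * of_real (w (fst x)))) \<phi>"
  unfolding fun_eq_iff
proof
  fix x :: "nat list \<times> bool"
  show "D_fin w (Rc w l \<phi>) x = blk (\<lambda>x. of_real (w (fst x)) * of_real (w (fst x)) / (1 + of_real (w (fst x)) * of_real (w (fst x))))
   (\<lambda>x. - l * of_real (w (fst x)) / (1 + of_real (w (fst x)) * of_real (w (fst x)))) \<phi> x"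
    unfolding D_fin_apply Rc_apply blk_def fst_flp flp_flp by (rule alg3[OF den_nz])
qed

lemma Rc_in_dom:
  assumes l: "cmod l = 1" and \<phi>: "\<phi> \<in> l2 (BP_index A N)"
  shows "Rc w l \<phi> \<in> D_dom A N w"
proof -
  have H: "\<phi> \<in> l2 (words A N \<times> UNIV)" using \<phi> by (simp add: BP_index_def)
  have "Rc w l \<phi> \<in> l2 (words A N \<times> UNIV)"
    unfolding Rc_def using l num1 num2 by (intro blk_H[OF H, of 1, THEN conjunct1]) (auto simp: cm_div cm_div2 cm_div2')
  moreover have "D_fin w (Rc w l \<phi>) \<in> l2 (words A N \<times> UNIV)"
  proof -
    have a: "cmod (complex_of_real r * complex_of_real r / (1 + complex_of_real r * complex_of_real r)) \<le> 1" for r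
    proof -
      have "cmod (complex_of_real r * complex_of_real r / (1 + complex_of_real r * complex_of_real r)) = \<bar>r\<bar> * \<bar>r\<bar> / (1 + r*r)"
        by (simp only: norm_divide cm_den norm_mult norm_of_real)
      also have "\<dots> = r * r / (1 + r*r)" by (simp add: abs_mult_self_eq)
      also have "\<dots> \<le> 1"
      proof -
        have "0 \<le> r * r" by simp
        then have "r * r \<le> 1 + r*r" "0 < 1 + r*r" by linarith+
        then show ?thesis by (simp add: divide_le_eq)
      qed
      finally show ?thesis .
    qed
    have b: "cmod (- l * complex_of_real r / (1 + complex_of_real r * complex_of_real r)) \<le> 1" for r
    proof -
      have "- l * complex_of_real r / (1 + complex_of_real r * complex_of_real r) = l * (- complex_of_real r / (1 + complex_of_real r * complex_of_real r))"
        by simp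
      then have "cmod (- l * complex_of_real r / (1 + complex_of_real r * complex_of_real r)) = cmod (complex_of_real r / (1 + complex_of_real r * complex_of_real r))"
        using l by (simp add: norm_mult norm_divide)
      then show ?thesis using cm_div num1 by simp
    qed
    show ?thesis unfolding D_fin_Rc_blk using a b by (intro blk_H[OF H, of 1, THEN conjunct1]) auto
  qed
  ultimately show ?thesis by (simp add: D_dom_eq Dmax_def BP_index_def)
qed

lemma resolvent_eq:
  assumes l: "cmod l = 1" "l * l = -1" and \<phi>: "\<phi> \<in> l2 (BP_index A N)"
  shows "resolvent (D_dom A N w) (D_op A N w) l \<phi> = Rc w l \<phi>"
  unfolding resolvent_def
proof (rule the_equality)
  have d: "Rc w l \<phi> \<in> D_dom A N w" by (rule Rc_in_dom[OF l(1) \<phi>])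
  show "Rc w l \<phi> \<in> D_dom A N w \<and> (\<lambda>x. D_op A N w (Rc w l \<phi>) x + l * Rc w l \<phi> x) = \<phi>"
    using d Rc_eqn[OF l(2)] D_op_eq[OF d] by simp
  fix \<psi> assume "\<psi> \<in> D_dom A N w \<and> (\<lambda>x. D_op A N w \<psi> x + l * \<psi> x) = \<phi>"
  then show "\<psi> = Rc w l \<phi>" using Rc_unique[OF l(2)] D_op_eq by metis
qed

lemma bdd_op_cong:
  assumes "\<And>\<phi>. \<phi> \<in> l2 I \<Longrightarrow> T \<phi> = T' \<phi>"
  shows "bdd_op (l2 I) T = bdd_op (l2 I) T'"
proof -
  have c1: "(\<forall>\<phi>\<in>l2 I. T \<phi> \<in> l2 I) = (\<forall>\<phi>\<in>l2 I. T' \<phi> \<in> l2 I)" using assms by auto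
  have c2: "(\<forall>\<phi>\<in>l2 I. \<forall>\<psi>\<in>l2 I. \<forall>a. T (\<lambda>x. a * \<phi> x + \<psi> x) = (\<lambda>x. a * T \<phi> x + T \<psi> x)) =
            (\<forall>\<phi>\<in>l2 I. \<forall>\<psi>\<in>l2 I. \<forall>a. T' (\<lambda>x. a * \<phi> x + \<psi> x) = (\<lambda>x. a * T' \<phi> x + T' \<psi> x))"
    using assms by (auto simp: l2_lin)
  have c3: "(\<exists>K. \<forall>\<phi>\<in>l2 I. l2_norm (T \<phi>) \<le> K * l2_norm \<phi>) = (\<exists>K. \<forall>\<phi>\<in>l2 I. l2_norm (T' \<phi>) \<le> K * l2_norm \<phi>)"
    using assms by auto
  show ?thesis unfolding bdd_op_def using c1 c2 c3 by blast
qed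

lemma cpt_op_cong:
  assumes "\<And>\<phi>. \<phi> \<in> l2 I \<Longrightarrow> T \<phi> = T' \<phi>"
  shows "cpt_op (l2 I) T = cpt_op (l2 I) T'"
proof -
  have "((\<forall>n. f n \<in> l2 I) \<and> bounded (range (\<lambda>n. l2_norm (f n))) \<longrightarrow>
        (\<exists>r \<psi>. strict_mono r \<and> \<psi> \<in> l2 I \<and> l2_conv (\<lambda>n. T (f (r n))) \<psi>)) =
        ((\<forall>n. f n \<in> l2 I) \<and> bounded (range (\<lambda>n. l2_norm (f n))) \<longrightarrow>
        (\<exists>r \<psi>. strict_mono r \<and> \<psi> \<in> l2 I \<and> l2_conv (\<lambda>n. T' (f (r n))) \<psi>))" for f :: "nat \<Rightarrow> _"
  proof (cases "\<forall>n. f n \<in> l2 I")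
    case True
    have "(\<lambda>n. T (f (r n))) = (\<lambda>n. T' (f (r n)))" for r :: "nat \<Rightarrow> nat"
      using True assms by auto
    then show ?thesis by simp
  next
    case False
    then show ?thesis by blast
  qed
  then show ?thesis unfolding cpt_op_def by (simp only: bdd_op_cong[OF assms])
qed

lemma hop_norm_cong:
  assumes "\<And>\<phi>. \<phi> \<in> H \<Longrightarrow> T \<phi> = T' \<phi>"
  shows "hop_norm H T = hop_norm H T'"
proof -
  have "{l2_norm (T \<phi>) |\<phi>. \<phi> \<in> H \<and> l2_norm \<phi> \<le> 1} = {l2_norm (T' \<phi>) |\<phi>. \<phi> \<in> H \<and> l2_norm \<phi> \<le> 1}"
  proof (rule set_eqI)
    fix y
    have "\<forall>\<phi>. (y = l2_norm (T \<phi>) \<and> \<phi> \<in> H \<and> l2_norm \<phi> \<le> 1) \<longleftrightarrow> (y = l2_norm (T' \<phi>) \<and> \<phi> \<in> H \<and> l2_norm \<phi> \<le> 1)"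
      using assms by auto
    then show "y \<in> {l2_norm (T \<phi>) |\<phi>. \<phi> \<in> H \<and> l2_norm \<phi> \<le> 1} \<longleftrightarrow> y \<in> {l2_norm (T' \<phi>) |\<phi>. \<phi> \<in> H \<and> l2_norm \<phi> \<le> 1}"
      by simp
  qed
  then show ?thesis by (simp add: hop_norm_def)
qed

lemma sing_val_cong:
  assumes "\<And>\<phi>. \<phi> \<in> H \<Longrightarrow> T \<phi> = T' \<phi>"
  shows "sing_val H T k = sing_val H T' k"
proof -
  have "hop_norm H (\<lambda>\<phi> x. T \<phi> x - F \<phi> x) = hop_norm H (\<lambda>\<phi> x. T' \<phi> x - F \<phi> x)" for F
    by (rule hop_norm_cong) (simp add: assms)
  then show ?thesis unfolding sing_val_def by simp
qed

definition bt :: "(nat list \<Rightarrow> nat \<Rightarrow> nat) \<Rightarrow> (nat list \<Rightarrow> nat \<Rightarrow> nat) \<Rightarrow> ((nat \<Rightarrow> nat) \<Rightarrow> complex) \<Rightarrow> nat list \<times> bool \<Rightarrow> complex" where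
  "bt tp tm b x = (if snd x then b (tp (fst x)) else b (tm (fst x)))"

lemma pi_tau_blk: "pi_tau tp tm b \<phi> = blk (bt tp tm b) (\<lambda>_. 0) \<phi>"
  by (auto simp: pi_tau_def blk_def bt_def fun_eq_iff)

lemma bt_bound:
  assumes "tp ` words A N \<subseteq> Omega A N" "tm ` words A N \<subseteq> Omega A N"
    "\<forall>x\<in>Omega A N. cmod (b x) \<le> K"
  shows "\<forall>x\<in>words A N \<times> UNIV. cmod (bt tp tm b x) \<le> K"
  using assms by (auto simp: bt_def)

lemma BP_H: "l2 (BP_index A N) = l2 (words A N \<times> UNIV)" by (simp add: BP_index_def)

lemma star_rep_pi:
  assumes tp: "tp ` words A N \<subseteq> Omega A N" and tm: "tm ` words A N \<subseteq> Omega A N"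
  shows "star_rep (Cont A N) (Omega A N) (l2 (BP_index A N)) (pi_tau tp tm)"
  unfolding star_rep_def
proof (intro conjI ballI allI impI)
  fix b assume b: "b \<in> Cont A N"
  obtain K where K: "K \<ge> 0" "\<forall>x\<in>Omega A N. cmod (b x) \<le> K" using Cont_bdd[OF b] by blast
  have "bdd_op (l2 (words A N \<times> UNIV)) (blk (bt tp tm b) (\<lambda>_. 0))"
    using bt_bound[OF tp tm K(2)] K(1) by (intro blk_bdd[of K]) auto
  then show "bdd_op (l2 (BP_index A N)) (pi_tau tp tm b)"
    unfolding BP_H pi_tau_blk[abs_def] by simp
next
  fix b c \<phi> assume "b \<in> Cont A N" "c \<in> Cont A N" and bc: "\<forall>x\<in>Omega A N. b x = c x"
    and \<phi>: "\<phi> \<in> l2 (BP_index A N)"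
  show "pi_tau tp tm b \<phi> = pi_tau tp tm c \<phi>"
  proof
    fix x :: "nat list \<times> bool"
    show "pi_tau tp tm b \<phi> x = pi_tau tp tm c \<phi> x"
    proof (cases "fst x \<in> words A N")
      case True
      then have "tp (fst x) \<in> Omega A N" "tm (fst x) \<in> Omega A N" using tp tm by auto
      then show ?thesis using bc by (cases x) (auto simp: pi_tau_def)
    next
      case False
      then have "\<phi> x = 0" using l2_out[OF \<phi>] by (cases x) (auto simp: BP_index_def)
      then show ?thesis by (cases x) (auto simp: pi_tau_def)
    qed
  qed
next
  fix b c \<phi> show "pi_tau tp tm (\<lambda>x. b x + c x) \<phi> = (\<lambda>i. pi_tau tp tm b \<phi> i + pi_tau tp tm c \<phi> i)"
    by (auto simp: pi_tau_def fun_eq_iff algebra_simps)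
next
  fix b a \<phi> show "pi_tau tp tm (\<lambda>x. a * b x) \<phi> = (\<lambda>i. a * pi_tau tp tm b \<phi> i)"
    by (auto simp: pi_tau_def fun_eq_iff algebra_simps)
next
  fix b c \<phi> show "pi_tau tp tm (\<lambda>x. b x * c x) \<phi> = pi_tau tp tm b (pi_tau tp tm c \<phi>)"
    by (auto simp: pi_tau_def fun_eq_iff algebra_simps)
next
  fix b \<phi> \<psi> show "l2_inner (pi_tau tp tm b \<phi>) \<psi> = l2_inner \<phi> (pi_tau tp tm (\<lambda>x. cnj (b x)) \<psi>)"
    unfolding l2_inner_def by (rule arg_cong[where f="\<lambda>f. infsum f UNIV"]) (auto simp: pi_tau_def fun_eq_iff)
qed

lemma grade_blk: "grade snd \<phi> = blk (\<lambda>x. if snd x then 1 else -1) (\<lambda>_. 0) \<phi>"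
  by (auto simp: grade_def blk_def fun_eq_iff)

lemma grade_H: "\<phi> \<in> l2 (BP_index A N) \<Longrightarrow> grade snd \<phi> \<in> l2 (BP_index A N)"
  unfolding grade_blk BP_H by (rule blk_H[of _ _ 1, THEN conjunct1]) auto

lemma D_fin_grade: "D_fin w (grade snd \<phi>) = (\<lambda>i. - grade snd (D_fin w \<phi>) i)"
  by (auto simp: D_fin_apply grade_def fun_eq_iff flp_def)

lemma grade_minus: "(\<lambda>i. - grade snd \<phi> i) = grade snd (\<lambda>i. - \<phi> i)"
  by (auto simp: grade_def fun_eq_iff)

lemma neg_H: "\<phi> \<in> l2 I \<Longrightarrow> (\<lambda>i. - \<phi> i) \<in> l2 I"
  using l2_lin[of \<phi> I "\<lambda>x. 0" "-1"] l2_zero[of I] by simp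

lemma D_grading:
  assumes "\<phi> \<in> D_dom A N w"
  shows "grade snd \<phi> \<in> D_dom A N w \<and> D_op A N w (grade snd \<phi>) = (\<lambda>i. - grade snd (D_op A N w \<phi>) i)"
proof -
  have \<phi>: "\<phi> \<in> l2 (BP_index A N)" "D_fin w \<phi> \<in> l2 (BP_index A N)" using assms by (auto simp: D_dom_eq Dmax_def)
  have "D_fin w (grade snd \<phi>) \<in> l2 (BP_index A N)"
    unfolding D_fin_grade grade_minus by (intro grade_H neg_H \<phi>(2))
  then have g: "grade snd \<phi> \<in> D_dom A N w" using grade_H[OF \<phi>(1)] by (simp add: D_dom_eq Dmax_def)
  show ?thesis using g D_op_eq[OF g] D_op_eq[OF assms] D_fin_grade by simp
qed

lemma grade_pi: "pi_tau tp tm b (grade snd \<phi>) = grade snd (pi_tau tp tm b \<phi>)"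
  by (auto simp: pi_tau_def grade_def fun_eq_iff)

abbreviation WW :: "(nat list \<Rightarrow> real) \<Rightarrow> nat list \<times> bool \<Rightarrow> complex" where
  "WW w x \<equiv> complex_of_real (w (fst x))"

lemma res_blk:
  assumes l: "cmod l = 1" "l * l = -1" and \<phi>: "\<phi> \<in> l2 (BP_index A N)"
  shows "pi_tau tp tm b (resolvent (D_dom A N w) (D_op A N w) l \<phi>) =
    blk (\<lambda>x. bt tp tm b x * (- l / (1 + WW w x * WW w x))) (\<lambda>x. bt tp tm b x * (WW w x / (1 + WW w x * WW w x))) \<phi>"
  unfolding resolvent_eq[OF l \<phi>] pi_tau_blk Rc_def by (simp add: blk_def fun_eq_iff algebra_simps)

lemma coef_bounds:
  assumes l: "cmod l = 1" and w0: "0 \<le> w (fst x)" and K: "cmod (bt tp tm b x) \<le> K"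
  shows "cmod (bt tp tm b x * (- l / (1 + WW w x * WW w x))) \<le> K * (2 / (1 + w (fst x)))"
    "cmod (bt tp tm b x * (WW w x / (1 + WW w x * WW w x))) \<le> K * (2 / (1 + w (fst x)))"
    "cmod (bt tp tm b x * (- l / (1 + WW w x * WW w x))) \<le> K"
    "cmod (bt tp tm b x * (WW w x / (1 + WW w x * WW w x))) \<le> K"
proof -
  have K0: "0 \<le> K" using K norm_ge_zero order_trans by blast
  have a1: "cmod (- l / (1 + WW w x * WW w x)) \<le> 2 / (1 + w (fst x))"
    using cm_div2[OF l] num4[OF w0] by simp
  have a2: "cmod (WW w x / (1 + WW w x * WW w x)) \<le> 2 / (1 + w (fst x))"
    using cm_div num3[OF w0] by simp
  have a3: "cmod (- l / (1 + WW w x * WW w x)) \<le> 1" using cm_div2[OF l] num2 by simp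
  have a4: "cmod (WW w x / (1 + WW w x * WW w x)) \<le> 1" using cm_div num1 by simp
  show "cmod (bt tp tm b x * (- l / (1 + WW w x * WW w x))) \<le> K * (2 / (1 + w (fst x)))"
    unfolding norm_mult using K a1 K0 by (intro mult_mono) auto
  show "cmod (bt tp tm b x * (WW w x / (1 + WW w x * WW w x))) \<le> K * (2 / (1 + w (fst x)))"
    unfolding norm_mult using K a2 K0 by (intro mult_mono) auto
  show "cmod (bt tp tm b x * (- l / (1 + WW w x * WW w x))) \<le> K"
    unfolding norm_mult using mult_mono[OF K a3] K0 by simp
  show "cmod (bt tp tm b x * (WW w x / (1 + WW w x * WW w x))) \<le> K"
    unfolding norm_mult using mult_mono[OF K a4] K0 by simp
qed

lemma decay_aux:
  fixes K e v :: real
  assumes "0 \<le> K" "e > 0" "2 * K / e \<le> v" "0 \<le> v"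
  shows "K * (2 / (1 + v)) \<le> e"
proof -
  have "2 * K \<le> e * v" using assms by (simp add: field_simps)
  also have "\<dots> \<le> e * (1 + v)" using assms by simp
  finally have "2 * K \<le> e * (1 + v)" .
  then show ?thesis using assms by (simp add: field_simps)
qed

lemma res_cpt:
  assumes l: "cmod l = 1" "l * l = -1" and b: "b \<in> Cont A N"
    and tp: "tp ` words A N \<subseteq> Omega A N" and tm: "tm ` words A N \<subseteq> Omega A N"
    and w0: "\<forall>\<mu>. 0 \<le> w \<mu>" and wdec: "\<forall>M. \<exists>n. \<forall>\<mu>. n < length \<mu> \<longrightarrow> M \<le> w \<mu>"
  shows "cpt_op (l2 (BP_index A N)) (\<lambda>\<phi>. pi_tau tp tm b (resolvent (D_dom A N w) (D_op A N w) l \<phi>))"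
proof -
  obtain K where K: "K \<ge> 0" "\<forall>x\<in>Omega A N. cmod (b x) \<le> K" using Cont_bdd[OF b] by blast
  have bK: "\<forall>x\<in>words A N \<times> UNIV. cmod (bt tp tm b x) \<le> K" by (rule bt_bound[OF tp tm K(2)])
  let ?\<alpha> = "\<lambda>x. bt tp tm b x * (- l / (1 + WW w x * WW w x))"
  let ?\<beta> = "\<lambda>x. bt tp tm b x * (WW w x / (1 + WW w x * WW w x))"
  have "cpt_op (l2 (words A N \<times> UNIV)) (blk ?\<alpha> ?\<beta>)"
  proof (rule blk_cpt[where g=length])
    show "finite {a \<in> words A N. length a \<le> n}" for n by (rule words_fin)
    show "0 \<le> K" by fact
    show "\<forall>x\<in>words A N \<times> UNIV. cmod (?\<alpha> x) \<le> K \<and> cmod (?\<beta> x) \<le> K"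
      using coef_bounds(3,4)[OF l(1)] w0 bK by blast
    fix e :: real assume e: "e > 0"
    obtain n where n: "\<forall>\<mu>. n < length \<mu> \<longrightarrow> 2 * K / e \<le> w \<mu>" using wdec by blast
    show "\<exists>n. \<forall>x\<in>words A N \<times> UNIV. n < length (fst x) \<longrightarrow> cmod (?\<alpha> x) \<le> e \<and> cmod (?\<beta> x) \<le> e"
    proof (intro exI[of _ n] ballI impI)
      fix x :: "nat list \<times> bool" assume x: "x \<in> words A N \<times> UNIV" "n < length (fst x)"
      have d: "K * (2 / (1 + w (fst x))) \<le> e" using decay_aux[OF K(1) e] n x(2) w0 by blast
      show "cmod (?\<alpha> x) \<le> e \<and> cmod (?\<beta> x) \<le> e"
        using coef_bounds(1,2)[OF l(1) _ bK[rule_format, OF x(1)]] w0 d by (meson order_trans)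
    qed
  qed
  then show ?thesis unfolding BP_H[symmetric]
    by (subst cpt_op_cong[where T'="blk ?\<alpha> ?\<beta>"]) (auto simp: res_blk[OF l])
qed

lemma LC_lip:
  assumes tp: "tp ` words A N \<subseteq> Omega A N" and tm: "tm ` words A N \<subseteq> Omega A N"
    and comp: "comparable A N tp tm" and b: "b \<in> LC A N"
  shows "b \<in> lip_alg (Cont A N) (pi_tau tp tm) (D_dom A N w) (D_op A N w)"
proof -
  have bC: "b \<in> Cont A N" using b LC_Cont by blast
  obtain Kb where Kb: "Kb \<ge> 0" "\<forall>x\<in>Omega A N. cmod (b x) \<le> Kb" using Cont_bdd[OF bC] by blast
  have bK: "\<forall>x\<in>words A N \<times> UNIV. cmod (bt tp tm b x) \<le> Kb" by (rule bt_bound[OF tp tm Kb(2)])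
  have bK': "\<forall>x\<in>words A N \<times> UNIV. cmod (bt tp tm b (flp x)) \<le> Kb"
    using bK by (auto simp: flp_def)
  obtain L where L: "\<forall>\<mu>\<in>words A N. L \<le> length \<mu> \<longrightarrow> b (tp \<mu>) = b (tm \<mu>)"
    using LC_agree[OF comp b tp tm] by blast
  define \<gamma> where "\<gamma> x = WW w x * (bt tp tm b (flp x) - bt tp tm b x)" for x
  define J where "J = {\<mu>\<in>words A N. length \<mu> \<le> L} \<times> (UNIV :: bool set)"
  define K where "K = (\<Sum>x\<in>J. cmod (\<gamma> x))"
  have Jfin: "finite J" unfolding J_def using words_fin by simp
  have K0: "0 \<le> K" unfolding K_def by (simp add: sum_nonneg)
  have gK: "\<forall>x\<in>words A N \<times> UNIV. cmod ((\<lambda>_. 0::complex) x) \<le> K \<and> cmod (\<gamma> x) \<le> K"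
  proof (intro ballI conjI)
    fix x :: "nat list \<times> bool" assume x: "x \<in> words A N \<times> UNIV"
    show "cmod ((\<lambda>_. 0::complex) x) \<le> K" using K0 by simp
    show "cmod (\<gamma> x) \<le> K"
    proof (cases "length (fst x) \<le> L")
      case True
      then have "x \<in> J" using x by (auto simp: J_def)
      then show ?thesis unfolding K_def using Jfin by (intro member_le_sum) auto
    next
      case False
      then have "b (tp (fst x)) = b (tm (fst x))" using L x by auto
      then have "bt tp tm b (flp x) = bt tp tm b x" by (auto simp: bt_def flp_def)
      then show ?thesis using K0 by (simp add: \<gamma>_def)
    qed
  qed
  have dom: "pi_tau tp tm b \<phi> \<in> D_dom A N w" if \<phi>: "\<phi> \<in> D_dom A N w" for \<phi>
  proof -
    have \<phi>H: "\<phi> \<in> l2 (words A N \<times> UNIV)" "D_fin w \<phi> \<in> l2 (words A N \<times> UNIV)"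
      using \<phi> by (auto simp: D_dom_eq Dmax_def BP_index_def)
    have "pi_tau tp tm b \<phi> \<in> l2 (words A N \<times> UNIV)"
      unfolding pi_tau_blk using bK Kb(1) by (intro blk_H[OF \<phi>H(1), of Kb, THEN conjunct1]) auto
    moreover have "D_fin w (pi_tau tp tm b \<phi>) = blk (\<lambda>x. bt tp tm b (flp x)) (\<lambda>_. 0) (D_fin w \<phi>)"
      by (simp add: pi_tau_blk blk_def D_fin_apply fun_eq_iff)
    moreover have "blk (\<lambda>x. bt tp tm b (flp x)) (\<lambda>_. 0) (D_fin w \<phi>) \<in> l2 (words A N \<times> UNIV)"
      using bK' Kb(1) by (intro blk_H[OF \<phi>H(2), of Kb, THEN conjunct1]) auto
    ultimately show ?thesis by (simp add: D_dom_eq Dmax_def BP_index_def)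
  qed
  have comm: "l2_norm (\<lambda>i. D_op A N w (pi_tau tp tm b \<phi>) i - pi_tau tp tm b (D_op A N w \<phi>) i) \<le> (2*K) * l2_norm \<phi>"
    if \<phi>: "\<phi> \<in> D_dom A N w" for \<phi>
  proof -
    have \<phi>H: "\<phi> \<in> l2 (words A N \<times> UNIV)" using \<phi> by (auto simp: D_dom_eq Dmax_def BP_index_def)
    have eq: "(\<lambda>i. D_op A N w (pi_tau tp tm b \<phi>) i - pi_tau tp tm b (D_op A N w \<phi>) i) = blk (\<lambda>_. 0) \<gamma> \<phi>"
      unfolding D_op_eq[OF dom[OF \<phi>]] D_op_eq[OF \<phi>]
      by (simp add: pi_tau_blk blk_def D_fin_apply fun_eq_iff \<gamma>_def algebra_simps)
    show ?thesis unfolding eq using blk_H[OF \<phi>H K0 gK] by simp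
  qed
  show ?thesis unfolding lip_alg_def using bC dom comm by blast
qed

lemma lip_dense:
  assumes tp: "tp ` words A N \<subseteq> Omega A N" and tm: "tm ` words A N \<subseteq> Omega A N"
    and comp: "comparable A N tp tm"
  shows "fdense_in (lip_alg (Cont A N) (pi_tau tp tm) (D_dom A N w) (D_op A N w)) (Cont A N) (Omega A N)"
proof -
  have "LC A N \<subseteq> lip_alg (Cont A N) (pi_tau tp tm) (D_dom A N w) (D_op A N w)"
    using LC_lip[OF tp tm comp] by blast
  then show ?thesis using LC_dense unfolding fdense_in_def by (meson subsetD)
qed

lemma ii_props: "cmod \<i> = 1" "\<i> * \<i> = -1" "cmod (- \<i>) = 1" "(- \<i>) * (- \<i>) = -1"
  by simp_all

lemma even_gen:
  assumes tp: "tp ` words A N \<subseteq> Omega A N" and tm: "tm ` words A N \<subseteq> Omega A N"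
    and comp: "comparable A N tp tm"
    and w0: "\<forall>\<mu>. 0 \<le> w \<mu>" and wdec: "\<forall>M. \<exists>n. \<forall>\<mu>. n < length \<mu> \<longrightarrow> M \<le> w \<mu>"
  shows "even_ufm (Cont A N) (Omega A N) (BP_index A N) snd (pi_tau tp tm) (D_dom A N w) (D_op A N w)"
  unfolding even_ufm_def
proof (intro conjI ballI)
  show "star_rep (Cont A N) (Omega A N) (l2 (BP_index A N)) (pi_tau tp tm)" by (rule star_rep_pi[OF tp tm])
  show "pi_tau tp tm b (grade snd \<phi>) = grade snd (pi_tau tp tm b \<phi>)" for b \<phi> by (rule grade_pi)
  show "self_adjoint (l2 (BP_index A N)) (D_dom A N w) (D_op A N w)" by (rule D_self_adjoint)
  show "grade snd \<phi> \<in> D_dom A N w" if "\<phi> \<in> D_dom A N w" for \<phi> using D_grading[OF that] by blast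
  show "D_op A N w (grade snd \<phi>) = (\<lambda>i. - grade snd (D_op A N w \<phi>) i)" if "\<phi> \<in> D_dom A N w" for \<phi>
    using D_grading[OF that] by blast
  show "cpt_op (l2 (BP_index A N)) (\<lambda>\<phi>. pi_tau tp tm b (resolvent (D_dom A N w) (D_op A N w) \<i> \<phi>))"
    if "b \<in> Cont A N" for b using res_cpt[OF ii_props(1,2) that tp tm w0 wdec] .
  show "cpt_op (l2 (BP_index A N)) (\<lambda>\<phi>. pi_tau tp tm b (resolvent (D_dom A N w) (D_op A N w) (- \<i>) \<phi>))"
    if "b \<in> Cont A N" for b using res_cpt[OF ii_props(3,4) that tp tm w0 wdec] .
  show "fdense_in (lip_alg (Cont A N) (pi_tau tp tm) (D_dom A N w) (D_op A N w)) (Cont A N) (Omega A N)"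
    by (rule lip_dense[OF tp tm comp])
qed

lemma faithful:
  assumes tp: "tp ` words A N \<subseteq> Omega A N" and tm: "tm ` words A N \<subseteq> Omega A N"
    and dense: "sdense_in (tp ` words A N \<union> tm ` words A N) (Omega A N)"
    and b: "b \<in> Cont A N" and z: "\<forall>\<phi>\<in>l2 (BP_index A N). pi_tau tp tm b \<phi> = (\<lambda>i. 0)"
  shows "\<forall>x\<in>Omega A N. b x = 0"
proof -
  have zS: "b y = 0" if yS: "y \<in> tp ` words A N \<union> tm ` words A N" for y
  proof -
    obtain \<mu> where \<mu>: "\<mu> \<in> words A N" "y = tp \<mu> \<or> y = tm \<mu>" using yS by blast
    have "delta (\<mu>, True) \<in> l2 (BP_index A N)" "delta (\<mu>, False) \<in> l2 (BP_index A N)"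
      using delta_fin[of "(\<mu>, True)" A N] delta_fin[of "(\<mu>, False)" A N] \<mu>(1) fin_supp_H
      by (auto simp: BP_index_def)
    then have "pi_tau tp tm b (delta (\<mu>, True)) (\<mu>, True) = 0" "pi_tau tp tm b (delta (\<mu>, False)) (\<mu>, False) = 0"
      using z by auto
    then have "b (tp \<mu>) = 0" "b (tm \<mu>) = 0" by (auto simp: pi_tau_def delta_def)
    then show ?thesis using \<mu>(2) by auto
  qed
  show ?thesis
  proof (rule ballI, rule ccontr)
    fix x assume x: "x \<in> Omega A N" and nz: "b x \<noteq> 0"
    have c: "\<forall>x\<in>Omega A N. \<forall>e>0. \<exists>d>0. \<forall>y\<in>Omega A N. seqdist x y < d \<longrightarrow> cmod (b y - b x) < e"
      using b by (simp add: Cont_def)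
    obtain d where d: "d > 0" "\<forall>y\<in>Omega A N. seqdist x y < d \<longrightarrow> cmod (b y - b x) < cmod (b x)"
      using c[rule_format, OF x] nz by (meson zero_less_norm_iff)
    obtain y where y: "y \<in> tp ` words A N \<union> tm ` words A N" "seqdist x y < d"
      using dense x d(1) unfolding sdense_in_def by blast
    have "y \<in> Omega A N" using y(1) tp tm by blast
    then have "cmod (b y - b x) < cmod (b x)" using d(2) y(2) by blast
    then show False using zS[OF y(1)] by simp
  qed
qed

lemma exists_level:
  fixes M k :: nat
  assumes M: "M \<ge> 2" and k: "k \<ge> 2"
  shows "\<exists>n. 2*M^n \<le> k \<and> k < 2*M^(Suc n)"
proof -
  define P where "P n \<longleftrightarrow> k < 2*M^(Suc n)" for n
  have "k < 2^k" by (rule less_exp)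
  also have "\<dots> \<le> M^k" using M by (intro power_mono) auto
  also have "\<dots> \<le> M^(Suc k)" using M by (intro power_increasing) auto
  also have "\<dots> \<le> 2 * M^(Suc k)" by simp
  finally have Pk: "P k" by (simp add: P_def)
  define n where "n = (LEAST n. P n)"
  have Pn: "P n" unfolding n_def using Pk by (rule LeastI)
  show ?thesis
  proof (cases n)
    case 0
    then show ?thesis using Pn k by (intro exI[of _ n]) (simp add: P_def)
  next
    case (Suc m)
    then have "\<not> P m" unfolding n_def using not_less_Least[of m P] by (metis lessI)
    then show ?thesis using Pn Suc by (intro exI[of _ n]) (simp add: P_def)
  qed
qed

lemma exp_sum_lemma:
  fixes s :: "nat \<Rightarrow> real" and C :: real and M :: nat
  assumes C: "C > 0" and M: "M \<ge> 2" and s0: "\<And>k. 0 \<le> s k"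
    and sb: "\<And>n k. 2*M^n \<le> k \<Longrightarrow> s k \<le> C * exp (-(real n + 1))"
  shows "summable (\<lambda>k. s k powr (2 * real M))"
proof (rule summable_comparison_test'[where N=2])
  let ?p = "2 * real M"
  show "summable (\<lambda>k. 4 * C powr ?p * inverse (real k ^ 2))"
    by (intro summable_mult inverse_power_summable) simp
  fix k :: nat assume k: "2 \<le> k"
  obtain n where n: "2*M^n \<le> k" "k < 2*M^(Suc n)" using exists_level[OF M k] by blast
  have p0: "0 \<le> ?p" by simp
  have "s k powr ?p \<le> (C * exp (-(real n + 1))) powr ?p"
    using sb[OF n(1)] s0 p0 by (intro powr_mono2) auto
  also have "\<dots> = C powr ?p * exp (-(real n + 1) * ?p)"
    using C by (simp add: powr_mult exp_powr_real)
  also have "exp (-(real n + 1) * ?p) \<le> 4 * inverse (real k ^ 2)"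
  proof -
    define E where "E = exp (real M * real (Suc n))"
    have "real M \<le> exp (real M)" using exp_ge_add_one_self[of "real M"] by linarith
    then have "real M ^ (Suc n) \<le> exp (real M) ^ (Suc n)" by (intro power_mono) auto
    also have "\<dots> = E" unfolding E_def by (metis exp_of_nat_mult mult.commute)
    finally have ME: "real M ^ Suc n \<le> E" .
    have "real k < real (2*M^(Suc n))" using n(2) by (simp only: of_nat_less_iff)
    then have "real k < 2 * real M ^ Suc n" by simp
    then have "real k / 2 < real M ^ Suc n" by simp
    then have kE: "real k / 2 < E" using ME by linarith
    have k0: "0 < real k / 2" using k by simp
    have e1: "-(real n + 1) * ?p = - (real M * real (Suc n) + real M * real (Suc n))" by (simp add: algebra_simps)
    have "exp (-(real n + 1) * ?p) = inverse (E * E)"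
      by (simp only: e1 exp_minus E_def exp_add)
    also have "\<dots> \<le> inverse ((real k / 2) * (real k / 2))"
      using kE k0 by (intro le_imp_inverse_le mult_mono) auto
    also have "\<dots> = 4 * inverse (real k ^ 2)" by (simp add: power2_eq_square field_simps)
    finally show ?thesis .
  qed
  then have "C powr ?p * exp (-(real n + 1) * ?p) \<le> C powr ?p * (4 * inverse (real k ^ 2))"
    by (intro mult_left_mono) auto
  finally show "norm (s k powr ?p) \<le> 4 * C powr ?p * inverse (real k ^ 2)" by simp
qed

lemma li_lemma:
  fixes s :: "nat \<Rightarrow> real" and C \<sigma> :: real and M :: nat
  assumes C: "C > 0" and M: "M \<ge> 2" and s0: "\<And>k. 0 \<le> s k" and \<sigma>: "1/2 \<le> \<sigma>"
    and sb: "\<And>n k. 2*M^n \<le> k \<Longrightarrow> s k \<le> C / (real n + 1) powr \<sigma>"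
  shows "s \<in> O(\<lambda>k. ln (real k) powr (-1/2))"
proof (rule bigoI)
  define L0 where "L0 = ln (2 * real M)"
  have L0: "0 < L0" using M by (simp add: L0_def)
  show "\<forall>\<^sub>F k in at_top. norm (s k) \<le> (C * L0 powr (1/2)) * norm (ln (real k) powr (-1/2))"
    unfolding eventually_at_top_linorder
  proof (intro exI[of _ 2] allI impI)
    fix k :: nat assume k: "2 \<le> k"
    obtain n where n: "2*M^n \<le> k" "k < 2*M^(Suc n)" using exists_level[OF M k] by blast
    have lk: "0 < ln (real k)" using k by simp
    have "real k < real (2*M^(Suc n))" using n(2) by (simp only: of_nat_less_iff)
    then have kr: "real k < 2 * real M ^ Suc n" by simp
    have "ln (real k) < ln (2 * real M ^ Suc n)"
      using kr k by (subst ln_less_cancel_iff) auto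
    also have "\<dots> = ln 2 + real (Suc n) * ln (real M)"
    proof -
      have "ln (2 * real M ^ Suc n) = ln 2 + ln (real M ^ Suc n)" using M by (simp add: ln_mult)
      also have "ln (real M ^ Suc n) = real (Suc n) * ln (real M)" by (rule ln_realpow)
      finally show ?thesis .
    qed
    also have "\<dots> \<le> real (Suc n) * ln 2 + real (Suc n) * ln (real M)"
      using M by (intro add_mono mult_right_mono) (auto intro: ln_ge_zero)
    also have "\<dots> = (real n + 1) * L0"
    proof -
      have L0eq: "L0 = ln 2 + ln (real M)" using M by (simp add: L0_def ln_mult)
      show ?thesis unfolding L0eq by (simp add: algebra_simps)
    qed
    finally have "ln (real k) / L0 \<le> real n + 1" using L0 by (simp add: field_simps)
    then have "(ln (real k) / L0) powr (1/2) \<le> (real n + 1) powr (1/2)"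
      using lk L0 by (intro powr_mono2) auto
    also have "\<dots> \<le> (real n + 1) powr \<sigma>" using \<sigma> by (intro powr_mono) auto
    finally have a: "(ln (real k) / L0) powr (1/2) \<le> (real n + 1) powr \<sigma>" .
    have a0: "0 < (ln (real k) / L0) powr (1/2)" using lk L0 by simp
    have "s k \<le> C / (real n + 1) powr \<sigma>" by (rule sb[OF n(1)])
    also have "\<dots> \<le> C / (ln (real k) / L0) powr (1/2)"
      using a a0 C by (intro divide_left_mono) auto
    also have "\<dots> = (C * L0 powr (1/2)) * ln (real k) powr (-1/2)"
      using lk L0 by (simp add: powr_divide powr_minus_divide)
    finally show "norm (s k) \<le> (C * L0 powr (1/2)) * norm (ln (real k) powr (-1/2))"
      using s0[of k] by simp
  qed
qed

lemma res_sing: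
  assumes l: "cmod l = 1" "l * l = -1" and Kb: "0 \<le> Kb" "\<forall>x\<in>Omega A N. cmod (b x) \<le> Kb"
    and tp: "tp ` words A N \<subseteq> Omega A N" and tm: "tm ` words A N \<subseteq> Omega A N"
    and w0: "\<forall>\<mu>. 0 \<le> w \<mu>" and v: "0 \<le> v" "\<forall>\<mu>. n < length \<mu> \<longrightarrow> v \<le> w \<mu>"
    and k: "2*(N+1)^n \<le> k"
  shows "sing_val (l2 (BP_index A N)) (\<lambda>\<phi>. pi_tau tp tm b (resolvent (D_dom A N w) (D_op A N w) l \<phi>)) k
          \<le> 2 * (Kb * (2 / (1 + v)))"
proof -
  have bK: "\<forall>x\<in>words A N \<times> UNIV. cmod (bt tp tm b x) \<le> Kb" by (rule bt_bound[OF tp tm Kb(2)])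
  let ?\<alpha> = "\<lambda>x. bt tp tm b x * (- l / (1 + WW w x * WW w x))"
  let ?\<beta> = "\<lambda>x. bt tp tm b x * (WW w x / (1 + WW w x * WW w x))"
  have "sing_val (l2 (words A N \<times> UNIV)) (blk ?\<alpha> ?\<beta>) k \<le> 2 * (Kb * (2 / (1 + v)))"
  proof (rule blk_sing[where g=length and n=n and K=Kb])
    show "finite {a \<in> words A N. length a \<le> n}" by (rule words_fin)
    show "card ({a \<in> words A N. length a \<le> n} \<times> (UNIV::bool set)) \<le> k"
      using words_card[of A N n] k by linarith
    show "0 \<le> Kb" by fact
    show "\<forall>x\<in>words A N \<times> UNIV. cmod (?\<alpha> x) \<le> Kb \<and> cmod (?\<beta> x) \<le> Kb"
      using coef_bounds(3,4)[OF l(1)] w0 bK by blast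
    show "0 \<le> Kb * (2 / (1 + v))" using Kb(1) v(1) by simp
    show "\<forall>x\<in>words A N \<times> UNIV. n < length (fst x) \<longrightarrow> cmod (?\<alpha> x) \<le> Kb * (2 / (1 + v)) \<and> cmod (?\<beta> x) \<le> Kb * (2 / (1 + v))"
    proof (intro ballI impI)
      fix x :: "nat list \<times> bool" assume x: "x \<in> words A N \<times> UNIV" "n < length (fst x)"
      have "2 / (1 + w (fst x)) \<le> 2 / (1 + v)" using v x(2) w0 by (intro divide_left_mono) auto
      then have d: "Kb * (2 / (1 + w (fst x))) \<le> Kb * (2 / (1 + v))" using Kb(1) by (intro mult_left_mono)
      show "cmod (?\<alpha> x) \<le> Kb * (2 / (1 + v)) \<and> cmod (?\<beta> x) \<le> Kb * (2 / (1 + v))"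
        using coef_bounds(1,2)[OF l(1) _ bK[rule_format, OF x(1)]] w0 d by (meson order_trans)
    qed
  qed
  then show ?thesis unfolding BP_H
    by (subst sing_val_cong[where T'="blk ?\<alpha> ?\<beta>"]) (auto simp: res_blk[OF l] BP_H[symmetric])
qed

lemma res_bdd:
  assumes l: "cmod l = 1" "l * l = -1" and b: "b \<in> Cont A N"
    and tp: "tp ` words A N \<subseteq> Omega A N" and tm: "tm ` words A N \<subseteq> Omega A N"
    and w0: "\<forall>\<mu>. 0 \<le> w \<mu>"
  shows "bdd_op (l2 (BP_index A N)) (\<lambda>\<phi>. pi_tau tp tm b (resolvent (D_dom A N w) (D_op A N w) l \<phi>))"
proof -
  obtain K where K: "K \<ge> 0" "\<forall>x\<in>Omega A N. cmod (b x) \<le> K" using Cont_bdd[OF b] by blast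
  have bK: "\<forall>x\<in>words A N \<times> UNIV. cmod (bt tp tm b x) \<le> K" by (rule bt_bound[OF tp tm K(2)])
  let ?\<alpha> = "\<lambda>x. bt tp tm b x * (- l / (1 + WW w x * WW w x))"
  let ?\<beta> = "\<lambda>x. bt tp tm b x * (WW w x / (1 + WW w x * WW w x))"
  have "bdd_op (l2 (words A N \<times> UNIV)) (blk ?\<alpha> ?\<beta>)"
    using coef_bounds(3,4)[OF l(1)] w0 bK K(1) by (intro blk_bdd[of K]) auto
  then show ?thesis unfolding BP_H[symmetric]
    by (subst bdd_op_cong[where T'="blk ?\<alpha> ?\<beta>"]) (auto simp: res_blk[OF l])
qed

lemma exp_dec: "\<forall>M. \<exists>n. \<forall>\<mu>. n < length \<mu> \<longrightarrow> M \<le> w_exp \<mu>"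
proof
  fix M :: real
  obtain n :: nat where n: "M \<le> real n" using real_arch_simple by blast
  have "M \<le> w_exp \<mu>" if "n < length \<mu>" for \<mu>
  proof -
    have "M \<le> real (length \<mu>)" using n that by linarith
    also have "\<dots> \<le> exp (real (length \<mu>))" using exp_ge_add_one_self[of "real (length \<mu>)"] by linarith
    finally show ?thesis by (simp add: w_exp_def)
  qed
  then show "\<exists>n. \<forall>\<mu>. n < length \<mu> \<longrightarrow> M \<le> w_exp \<mu>" by blast
qed

lemma ws_dec:
  assumes s: "0 < s"
  shows "\<forall>M. \<exists>n. \<forall>\<mu>. n < length \<mu> \<longrightarrow> M \<le> w_s s \<mu>"
proof
  fix M :: real
  obtain n :: nat where n: "max M 0 powr (1/s) \<le> real n" using real_arch_simple by blast
  have "M \<le> w_s s \<mu>" if "n < length \<mu>" for \<mu>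
  proof -
    have "max M 0 powr (1/s) \<le> real (length \<mu>)" using n that by linarith
    then have "(max M 0 powr (1/s)) powr s \<le> real (length \<mu>) powr s" using s by (intro powr_mono2) auto
    moreover have "(max M 0 powr (1/s)) powr s = max M 0"
      using s by (simp add: powr_powr)
    ultimately show ?thesis by (simp add: w_s_def)
  qed
  then show "\<exists>n. \<forall>\<mu>. n < length \<mu> \<longrightarrow> M \<le> w_s s \<mu>" by blast
qed

lemma N_pos:
  assumes tp: "tp ` words A N \<subseteq> Omega A N"
  shows "N \<ge> 1"
proof -
  have "[] \<in> words A N" by (simp add: words_def admissible_def)
  then have "tp [] \<in> Omega A N" using tp by blast
  then have "tp [] 0 < N" by (simp add: Omega_def)
  then show ?thesis by simp
qed

lemma li_res:
  assumes l: "cmod l = 1" "l * l = -1" and b: "b \<in> Cont A N"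
    and tp: "tp ` words A N \<subseteq> Omega A N" and tm: "tm ` words A N \<subseteq> Omega A N"
    and s: "1/2 \<le> s"
  shows "Li_half (l2 (BP_index A N)) (\<lambda>\<phi>. pi_tau tp tm b (resolvent (D_dom A N (w_s s)) (D_op A N (w_s s)) l \<phi>))"
  unfolding Li_half_def
proof
  have s0: "0 < s" using s by simp
  have w0: "\<forall>\<mu>. 0 \<le> w_s s \<mu>" by (simp add: w_s_def)
  show "cpt_op (l2 (BP_index A N)) (\<lambda>\<phi>. pi_tau tp tm b (resolvent (D_dom A N (w_s s)) (D_op A N (w_s s)) l \<phi>))"
    by (rule res_cpt[OF l b tp tm w0 ws_dec[OF s0]])
  obtain Kb where Kb: "Kb \<ge> 0" "\<forall>x\<in>Omega A N. cmod (b x) \<le> Kb" using Cont_bdd[OF b] by blast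
  have N1: "N \<ge> 1" by (rule N_pos[OF tp])
  let ?s = "\<lambda>k. sing_val (l2 (BP_index A N)) (\<lambda>\<phi>. pi_tau tp tm b (resolvent (D_dom A N (w_s s)) (D_op A N (w_s s)) l \<phi>)) k"
  show "?s \<in> O(\<lambda>k. ln (real k) powr (-1/2))"
  proof (rule li_lemma[where C="4 * (Kb + 1)" and M="N+1" and \<sigma>=s])
    show "0 < 4 * (Kb + 1)" using Kb by simp
    show "2 \<le> N + 1" using N1 by simp
    show "0 \<le> ?s k" for k by (rule sing_val_nonneg[OF res_bdd[OF l b tp tm w0]])
    show "1/2 \<le> s" by fact
    fix n k :: nat assume k: "2*(N+1)^n \<le> k"
    define v where "v = (real n + 1) powr s"
    have v0: "0 < v" by (simp add: v_def)
    have vle: "\<forall>\<mu>. n < length \<mu> \<longrightarrow> v \<le> w_s s \<mu>"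
      unfolding v_def w_s_def using s0 by (auto intro!: powr_mono2)
    have "?s k \<le> 2 * (Kb * (2 / (1 + v)))"
      by (rule res_sing[OF l Kb tp tm w0 _ vle k]) (use v0 in simp)
    also have "\<dots> \<le> 4 * (Kb + 1) / v"
    proof -
      have "2 / (1 + v) \<le> 2 / v" using v0 by (intro divide_left_mono) auto
      then have "Kb * (2 / (1 + v)) \<le> (Kb + 1) * (2 / v)" using Kb(1) v0 by (intro mult_mono) auto
      then have "2 * (Kb * (2 / (1 + v))) \<le> 2 * ((Kb + 1) * (2 / v))" by linarith
      also have "2 * ((Kb + 1) * (2 / v)) = 4 * (Kb + 1) / v" by simp
      finally show ?thesis .
    qed
    finally show "?s k \<le> 4 * (Kb + 1) / (real n + 1) powr s" by (simp add: v_def)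
  qed
qed

lemma sch_res:
  assumes l: "cmod l = 1" "l * l = -1" and b: "b \<in> Cont A N"
    and tp: "tp ` words A N \<subseteq> Omega A N" and tm: "tm ` words A N \<subseteq> Omega A N"
  shows "schatten (l2 (BP_index A N)) (2 * real (N+1)) (\<lambda>\<phi>. pi_tau tp tm b (resolvent (D_dom A N w_exp) (D_op A N w_exp) l \<phi>))"
  unfolding schatten_def
proof
  have w0: "\<forall>\<mu>. 0 \<le> w_exp \<mu>" by (simp add: w_exp_def)
  show "cpt_op (l2 (BP_index A N)) (\<lambda>\<phi>. pi_tau tp tm b (resolvent (D_dom A N w_exp) (D_op A N w_exp) l \<phi>))"
    by (rule res_cpt[OF l b tp tm w0 exp_dec])
  obtain Kb where Kb: "Kb \<ge> 0" "\<forall>x\<in>Omega A N. cmod (b x) \<le> Kb" using Cont_bdd[OF b] by blast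
  have N1: "N \<ge> 1" by (rule N_pos[OF tp])
  let ?s = "\<lambda>k. sing_val (l2 (BP_index A N)) (\<lambda>\<phi>. pi_tau tp tm b (resolvent (D_dom A N w_exp) (D_op A N w_exp) l \<phi>)) k"
  show "summable (\<lambda>k. ?s k powr (2 * real (N+1)))"
  proof (rule exp_sum_lemma[where C="4 * (Kb + 1)" and M="N+1"])
    show "0 < 4 * (Kb + 1)" using Kb by simp
    show "2 \<le> N + 1" using N1 by simp
    show "0 \<le> ?s k" for k by (rule sing_val_nonneg[OF res_bdd[OF l b tp tm w0]])
    fix n k :: nat assume k: "2*(N+1)^n \<le> k"
    define v where "v = exp (real n + 1)"
    have v0: "0 < v" by (simp add: v_def)
    have vle: "\<forall>\<mu>. n < length \<mu> \<longrightarrow> v \<le> w_exp \<mu>"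
      unfolding v_def w_exp_def by auto
    have "?s k \<le> 2 * (Kb * (2 / (1 + v)))"
      by (rule res_sing[OF l Kb tp tm w0 _ vle k]) (use v0 in simp)
    also have "\<dots> \<le> 4 * (Kb + 1) * exp (-(real n + 1))"
    proof -
      have "2 / (1 + v) \<le> 2 / v" using v0 by (intro divide_left_mono) auto
      also have "2 / v = 2 * exp (-(real n + 1))" by (simp only: v_def exp_minus divide_inverse)
      finally have "Kb * (2 / (1 + v)) \<le> (Kb + 1) * (2 * exp (-(real n + 1)))"
        using Kb(1) v0 by (intro mult_mono) auto
      then have "2 * (Kb * (2 / (1 + v))) \<le> 2 * ((Kb + 1) * (2 * exp (-(real n + 1))))" by linarith
      also have "2 * ((Kb + 1) * (2 * exp (-(real n + 1)))) = 4 * (Kb + 1) * exp (-(real n + 1))" by simp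
      finally show ?thesis .
    qed
    finally show "?s k \<le> 4 * (Kb + 1) * exp (-(real n + 1))" .
  qed
qed

theorem proposition4p4:
  fixes A :: "nat \<Rightarrow> nat \<Rightarrow> bool" and N :: nat
    and tp tm :: "nat list \<Rightarrow> nat \<Rightarrow> nat" and s :: real
  assumes no_zero_row: "\<forall>i<N. \<exists>j<N. A i j"
    and no_zero_col: "\<forall>j<N. \<exists>i<N. A i j"
    and tp_into: "tp ` words A N \<subseteq> Omega A N"
    and tm_into: "tm ` words A N \<subseteq> Omega A N"
    and comp: "comparable A N tp tm"
    and s_pos: "0 < s" and s_le: "s \<le> 1"
  shows "even_ufm (Cont A N) (Omega A N) (BP_index A N) snd (pi_tau tp tm)
            (D_dom A N w_exp) (D_op A N w_exp)
       \<and> even_ufm (Cont A N) (Omega A N) (BP_index A N) snd (pi_tau tp tm)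
            (D_dom A N (w_s s)) (D_op A N (w_s s))
       \<and> (1/2 \<le> s \<longrightarrow> theta_summable (Cont A N) (Omega A N) (BP_index A N) (pi_tau tp tm)
            (D_dom A N (w_s s)) (D_op A N (w_s s)))
       \<and> finitely_summable (Cont A N) (Omega A N) (BP_index A N) (pi_tau tp tm)
            (D_dom A N w_exp) (D_op A N w_exp)
       \<and> (sdense_in (tp ` words A N \<union> tm ` words A N) (Omega A N) \<longrightarrow>
            spectral_triple (Cont A N) (Omega A N) (BP_index A N) snd (pi_tau tp tm)
              (D_dom A N w_exp) (D_op A N w_exp)
          \<and> spectral_triple (Cont A N) (Omega A N) (BP_index A N) snd (pi_tau tp tm)
              (D_dom A N (w_s s)) (D_op A N (w_s s)))"
proof -
  have w0e: "\<forall>\<mu>. 0 \<le> w_exp \<mu>" by (simp add: w_exp_def)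
  have w0s: "\<forall>\<mu>. 0 \<le> w_s s \<mu>" by (simp add: w_s_def)
  have E1: "even_ufm (Cont A N) (Omega A N) (BP_index A N) snd (pi_tau tp tm) (D_dom A N w_exp) (D_op A N w_exp)"
    by (rule even_gen[OF tp_into tm_into comp w0e exp_dec])
  have E2: "even_ufm (Cont A N) (Omega A N) (BP_index A N) snd (pi_tau tp tm) (D_dom A N (w_s s)) (D_op A N (w_s s))"
    by (rule even_gen[OF tp_into tm_into comp w0s ws_dec[OF s_pos]])
  have LCsub: "LC A N \<subseteq> lip_alg (Cont A N) (pi_tau tp tm) (D_dom A N w) (D_op A N w)" for w
    using LC_lip[OF tp_into tm_into comp] by blast
  have th: "theta_summable (Cont A N) (Omega A N) (BP_index A N) (pi_tau tp tm) (D_dom A N (w_s s)) (D_op A N (w_s s))"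
    if hs: "1/2 \<le> s"
    unfolding theta_summable_def
  proof (intro exI[of _ "LC A N"] conjI ballI)
    show "LC A N \<subseteq> lip_alg (Cont A N) (pi_tau tp tm) (D_dom A N (w_s s)) (D_op A N (w_s s))" by (rule LCsub)
    show "subalgebra (LC A N)" by (rule LC_subalg)
    show "fdense_in (LC A N) (Cont A N) (Omega A N)" by (rule LC_dense)
    fix b assume "b \<in> LC A N"
    then have b: "b \<in> Cont A N" using LC_Cont by blast
    show "Li_half (l2 (BP_index A N)) (\<lambda>\<phi>. pi_tau tp tm b (resolvent (D_dom A N (w_s s)) (D_op A N (w_s s)) \<i> \<phi>))"
      by (rule li_res[OF ii_props(1,2) b tp_into tm_into hs])
    show "Li_half (l2 (BP_index A N)) (\<lambda>\<phi>. pi_tau tp tm b (resolvent (D_dom A N (w_s s)) (D_op A N (w_s s)) (- \<i>) \<phi>))"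
      by (rule li_res[OF ii_props(3,4) b tp_into tm_into hs])
  qed
  have fs: "finitely_summable (Cont A N) (Omega A N) (BP_index A N) (pi_tau tp tm) (D_dom A N w_exp) (D_op A N w_exp)"
    unfolding finitely_summable_def
  proof (intro exI[of _ "2 * real (N+1)"] conjI)
    show "0 < 2 * real (N + 1)" by simp
    show "p_summable (2 * real (N + 1)) (Cont A N) (Omega A N) (BP_index A N) (pi_tau tp tm) (D_dom A N w_exp) (D_op A N w_exp)"
      unfolding p_summable_def
    proof (intro exI[of _ "LC A N"] conjI ballI)
      show "LC A N \<subseteq> lip_alg (Cont A N) (pi_tau tp tm) (D_dom A N w_exp) (D_op A N w_exp)" by (rule LCsub)
      show "subalgebra (LC A N)" by (rule LC_subalg)
      show "fdense_in (LC A N) (Cont A N) (Omega A N)" by (rule LC_dense)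
      fix b assume "b \<in> LC A N"
      then have b: "b \<in> Cont A N" using LC_Cont by blast
      show "schatten (l2 (BP_index A N)) (2 * real (N + 1)) (\<lambda>\<phi>. pi_tau tp tm b (resolvent (D_dom A N w_exp) (D_op A N w_exp) \<i> \<phi>))"
        by (rule sch_res[OF ii_props(1,2) b tp_into tm_into])
      show "schatten (l2 (BP_index A N)) (2 * real (N + 1)) (\<lambda>\<phi>. pi_tau tp tm b (resolvent (D_dom A N w_exp) (D_op A N w_exp) (- \<i>) \<phi>))"
        by (rule sch_res[OF ii_props(3,4) b tp_into tm_into])
    qed
  qed
  have sp: "spectral_triple (Cont A N) (Omega A N) (BP_index A N) snd (pi_tau tp tm) (D_dom A N w_exp) (D_op A N w_exp)
          \<and> spectral_triple (Cont A N) (Omega A N) (BP_index A N) snd (pi_tau tp tm) (D_dom A N (w_s s)) (D_op A N (w_s s))"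
    if d: "sdense_in (tp ` words A N \<union> tm ` words A N) (Omega A N)"
    unfolding spectral_triple_def using E1 E2 faithful[OF tp_into tm_into d] by blast
  show ?thesis using E1 E2 th fs sp by blast
qed

end
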